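(* Suppose $X_i^TX_i=\beta_iI_d$ with $\beta_i>0$ for every client $i$, and let $\{\hat\theta_i\}_{i=1}^n$ be the $\theta$-components of the minimizer of $$\sum_{j=1}^k\Big(\frac{\lambda_j}{2}\|w_j-\bar w\|^2+\sum_{i\in\mathcal I_j}\Big(\frac{1}{2\sigma_i^2}\|y_i-X_i\theta_i\|^2+\frac{\gamma_i}{2}\|\theta_i-w_j\|^2\Big)\Big)$$ over $\theta_i,w_j,\bar w\in\mathbb R^d$, with $\lambda_j=1/\bar\sigma^2$ for all $j$ and $\gamma_i=1/\bar\sigma_j^2$ for $i\in\mathcal I_j$. Fix a client $i$, let $\hat\theta^d_{i'}=(X_{i'}^TX_{i'})^{-1}X_{i'}^Ty_{i'}$, let $W_i\in\mathbb R^{n_i+(n-1)d}$ be the stacked vector $(y_i,(\hat\theta^d_{i'})_{i'\ne i})$ and $Z_i\in\mathbb R^{(n_i+(n-1)d)\times d}$ the stacked matrix $(X_i;I_d;\dots;I_d)$. Then $\hat\theta_i=L^\star W_i$ for a deterministic matrix $L^\star$ with $L^\star Z_i=I_d$, and for every deterministic matrix $L\in\mathbb R^{d\times(n_i+(n-1)d)}$ with $LZ_i=I_d$ (a linear unbiased estimator of $\theta_i^*$ given $W_i$), $$\mathbb E\|\hat\theta_i-\theta_i^*\|^2\le\mathbb E\|LW_i-\theta_i^*\|^2,$$ the expectation being taken over all randomness in the model.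
   Context: Hierarchical linear model: clients $1,\dots,n$ are partitioned into nonempty disjoint clusters $\mathcal I_1,\dots,\mathcal I_k$. For an unknown $\bar\theta^*\in\mathbb R^d$ and known variances $\bar\sigma^2>0$, $\bar\sigma_j^2>0$, $\sigma_i^2>0$: $\bar\theta_j^*=\bar\theta^*+\bar\xi_j$ with $\bar\xi_j\sim\mathcal N(0,\bar\sigma^2I_d)$ ($j=1,\dots,k$); $\theta_i^*=\bar\theta_j^*+\xi_i$ with $\xi_i\sim\mathcal N(0,\bar\sigma_j^2I_d)$ for $i\in\mathcal I_j$; $y_i=X_i\theta_i^*+\epsilon_i$ with $\epsilon_i\sim\mathcal N(0,\sigma_i^2I_{n_i})$, where $X_i\in\mathbb R^{n_i\times d}$ are deterministic design matrices; all $\bar\xi_j,\xi_i,\epsilon_i$ are mutually independent. *)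

theory Defs
  imports "HOL-Analysis.Analysis" "HOL-Probability.Probability"
begin

text \<open>Clients are 0..<n, clusters 0..<k; cluster membership is
  given by a labelling cl (client i' belongs to cluster cl i'). Client i' has
  m i' observations; the design matrix X_i' is given by its rows X i' r (r < m i'),
  vectors in R^(m i') are functions nat => real restricted to indices < m i'.
  All scalar Gaussian coordinates of the noises are indexed by noise_idx.\<close>

datatype 'd noise_idx = ClustN nat 'd | ClientN nat 'd | ObsN nat nat

definition noise_set :: "nat \<Rightarrow> nat \<Rightarrow> (nat \<Rightarrow> nat) \<Rightarrow> 'd noise_idx set" where
  "noise_set k n m = {ClustN j c | j c. j < k} \<union> {ClientN i c | i c. i < n}
      \<union> {ObsN i r | i r. i < n \<and> r < m i}"

definition noise_sd :: "real \<Rightarrow> (nat \<Rightarrow> real) \<Rightarrow> (nat \<Rightarrow> real) \<Rightarrow> (nat \<Rightarrow> nat)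
    \<Rightarrow> 'd noise_idx \<Rightarrow> real" where
  "noise_sd sb sbj sig cl \<iota> = (case \<iota> of ClustN j c \<Rightarrow> sb | ClientN i c \<Rightarrow> sbj (cl i)
      | ObsN i r \<Rightarrow> sig i)"

definition cluster_param :: "real^'d \<Rightarrow> ('d::finite noise_idx \<Rightarrow> 'a \<Rightarrow> real) \<Rightarrow> nat \<Rightarrow> 'a \<Rightarrow> real^'d" where
  "cluster_param \<theta>0 g j \<omega> = \<theta>0 + (\<chi> c. g (ClustN j c) \<omega>)"

definition client_param :: "real^'d \<Rightarrow> (nat \<Rightarrow> nat) \<Rightarrow> ('d::finite noise_idx \<Rightarrow> 'a \<Rightarrow> real)
    \<Rightarrow> nat \<Rightarrow> 'a \<Rightarrow> real^'d" where
  "client_param \<theta>0 cl g i \<omega> = cluster_param \<theta>0 g (cl i) \<omega> + (\<chi> c. g (ClientN i c) \<omega>)"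

definition obs :: "(nat \<Rightarrow> nat \<Rightarrow> real^'d) \<Rightarrow> real^'d \<Rightarrow> (nat \<Rightarrow> nat)
    \<Rightarrow> ('d::finite noise_idx \<Rightarrow> 'a \<Rightarrow> real) \<Rightarrow> nat \<Rightarrow> 'a \<Rightarrow> nat \<Rightarrow> real" where
  "obs X \<theta>0 cl g i \<omega> r = X i r \<bullet> client_param \<theta>0 cl g i \<omega> + g (ObsN i r) \<omega>"

definition gram :: "(nat \<Rightarrow> nat \<Rightarrow> real^'d::finite) \<Rightarrow> (nat \<Rightarrow> nat) \<Rightarrow> nat \<Rightarrow> real^'d^'d" where
  "gram X m i = (\<chi> a b. \<Sum>r<m i. X i r $ a * X i r $ b)"

definition Xty :: "(nat \<Rightarrow> nat \<Rightarrow> real^'d::finite) \<Rightarrow> (nat \<Rightarrow> nat) \<Rightarrow> nat \<Rightarrow> (nat \<Rightarrow> real) \<Rightarrow> real^'d" where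
  "Xty X m i yi = (\<Sum>r<m i. yi r *\<^sub>R X i r)"

definition direct_est :: "(nat \<Rightarrow> nat \<Rightarrow> real^'d::finite) \<Rightarrow> (nat \<Rightarrow> nat) \<Rightarrow> nat \<Rightarrow> (nat \<Rightarrow> real) \<Rightarrow> real^'d" where
  "direct_est X m i yi = matrix_inv (gram X m i) *v Xty X m i yi"

definition sqres :: "(nat \<Rightarrow> nat \<Rightarrow> real^'d::finite) \<Rightarrow> (nat \<Rightarrow> nat) \<Rightarrow> nat \<Rightarrow> (nat \<Rightarrow> real) \<Rightarrow> real^'d \<Rightarrow> real" where
  "sqres X m i yi \<theta> = (\<Sum>r<m i. (yi r - X i r \<bullet> \<theta>)\<^sup>2)"

text \<open>The hierarchical objective; y i r is observation r of client i.\<close>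
definition objective :: "nat \<Rightarrow> nat \<Rightarrow> (nat \<Rightarrow> nat) \<Rightarrow> (nat \<Rightarrow> nat \<Rightarrow> real^'d::finite) \<Rightarrow> (nat \<Rightarrow> nat)
    \<Rightarrow> (nat \<Rightarrow> real) \<Rightarrow> (nat \<Rightarrow> real) \<Rightarrow> (nat \<Rightarrow> real) \<Rightarrow> (nat \<Rightarrow> nat \<Rightarrow> real)
    \<Rightarrow> (nat \<Rightarrow> real^'d) \<Rightarrow> (nat \<Rightarrow> real^'d) \<Rightarrow> real^'d \<Rightarrow> real" where
  "objective k n m X cl lam gam sig y \<theta> w wb =
     (\<Sum>j<k. lam j / 2 * (norm (w j - wb))\<^sup>2 +
        (\<Sum>i\<in>{i. i < n \<and> cl i = j}. sqres X m i (y i) (\<theta> i) / (2 * (sig i)\<^sup>2)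
             + gam i / 2 * (norm (\<theta> i - w j))\<^sup>2))"

definition hier_est :: "nat \<Rightarrow> nat \<Rightarrow> (nat \<Rightarrow> nat) \<Rightarrow> (nat \<Rightarrow> nat \<Rightarrow> real^'d::finite) \<Rightarrow> (nat \<Rightarrow> nat)
    \<Rightarrow> (nat \<Rightarrow> real) \<Rightarrow> (nat \<Rightarrow> real) \<Rightarrow> (nat \<Rightarrow> real) \<Rightarrow> (nat \<Rightarrow> nat \<Rightarrow> real) \<Rightarrow> nat \<Rightarrow> real^'d" where
  "hier_est k n m X cl lam gam sig y = (SOME \<theta>. \<exists>w wb. \<forall>\<theta>' w' wb'.
      objective k n m X cl lam gam sig y \<theta> w wb \<le> objective k n m X cl lam gam sig y \<theta>' w' wb')"

text \<open>A d x (m i + (n-1) d) matrix L is represented blockwise: L = (A | B_i' for i' \<noteq> i),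
  where A r (r < m i) is the r-th column of the first block and B i' is the d x d block
  acting on the component theta^d_i'. blk_apply computes L W_i, blk_times_Z computes L Z_i.\<close>
definition blk_apply :: "(nat \<Rightarrow> nat) \<Rightarrow> nat \<Rightarrow> nat \<Rightarrow> (nat \<Rightarrow> real^'d::finite) \<Rightarrow> (nat \<Rightarrow> real^'d^'d)
    \<Rightarrow> (nat \<Rightarrow> real) \<Rightarrow> (nat \<Rightarrow> real^'d) \<Rightarrow> real^'d" where
  "blk_apply m n i A B yi \<theta>d = (\<Sum>r<m i. yi r *\<^sub>R A r) + (\<Sum>i'\<in>{..<n} - {i}. B i' *v \<theta>d i')"

definition blk_times_Z :: "(nat \<Rightarrow> nat \<Rightarrow> real^'d::finite) \<Rightarrow> (nat \<Rightarrow> nat) \<Rightarrow> nat \<Rightarrow> nat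
    \<Rightarrow> (nat \<Rightarrow> real^'d) \<Rightarrow> (nat \<Rightarrow> real^'d^'d) \<Rightarrow> real^'d^'d" where
  "blk_times_Z X m n i A B = (\<chi> a b. \<Sum>r<m i. A r $ a * X i r $ b) + (\<Sum>i'\<in>{..<n} - {i}. B i')"

end

theory Submission
  imports Defs
begin



lemma gauss_facts:
  fixes M :: "'a measure" and g :: "'i \<Rightarrow> 'a \<Rightarrow> real"
  assumes P: "prob_space M"
    and dist: "distributed M lborel X (\<lambda>x. ennreal (normal_density 0 s x))" and pos: "s > 0"
  shows "integrable M X" "integrable M (\<lambda>\<omega>. (X \<omega>)\<^sup>2)"
    "(\<integral>\<omega>. X \<omega> \<partial>M) = 0" "(\<integral>\<omega>. (X \<omega>)\<^sup>2 \<partial>M) = s\<^sup>2"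
proof -
  interpret prob_space M by fact
  have i1: "integrable lborel (\<lambda>x. normal_density 0 s x * x)"
    using integrable_normal_moment_nz_1[OF pos] by simp
  show iX: "integrable M X"
    using distributed_integrable[OF dist, of "\<lambda>x. x"] i1 by simp
  have i2: "integrable lborel (\<lambda>x. normal_density 0 s x * x\<^sup>2)"
    using integrable_normal_moment[OF pos, of 0 2] by simp
  show iX2: "integrable M (\<lambda>\<omega>. (X \<omega>)\<^sup>2)"
    using distributed_integrable[OF dist, of "\<lambda>x. x\<^sup>2"] i2 by simp
  show "(\<integral>\<omega>. X \<omega> \<partial>M) = 0"
    using normal_distributed_expectation[OF pos dist] by simp
  have "(\<integral>x. normal_density 0 s x * x\<^sup>2 \<partial>lborel) = s\<^sup>2"
    using pos integral_normal_moment_even[of s 0 1] by (simp add: field_simps power2_eq_square)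
  then show "(\<integral>\<omega>. (X \<omega>)\<^sup>2 \<partial>M) = s\<^sup>2"
    using pos distributed_integral[OF dist, of "\<lambda>x. x\<^sup>2"] by simp
qed

lemma gauss_sq:
  fixes M :: "'a measure" and g :: "'i \<Rightarrow> 'a \<Rightarrow> real"
  assumes P: "prob_space M" and fin: "finite N" and ind: "prob_space.indep_vars M (\<lambda>_. borel) g N"
    and dist: "\<forall>\<iota>\<in>N. distributed M lborel (g \<iota>) (\<lambda>x. ennreal (normal_density 0 (sd \<iota>) x))"
    and pos: "\<forall>\<iota>\<in>N. sd \<iota> > 0"
  shows "integrable M (\<lambda>\<omega>. (c + (\<Sum>\<iota>\<in>N. \<alpha> \<iota> * g \<iota> \<omega>))\<^sup>2)"
    "(\<integral>\<omega>. (c + (\<Sum>\<iota>\<in>N. \<alpha> \<iota> * g \<iota> \<omega>))\<^sup>2 \<partial>M) = c\<^sup>2 + (\<Sum>\<iota>\<in>N. (\<alpha> \<iota>)\<^sup>2 * (sd \<iota>)\<^sup>2)"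
proof -
  interpret prob_space M by fact
  have gi: "integrable M (g \<iota>)" "(\<integral>\<omega>. g \<iota> \<omega> \<partial>M) = 0"
     "integrable M (\<lambda>\<omega>. (g \<iota> \<omega>)\<^sup>2)" "(\<integral>\<omega>. (g \<iota> \<omega>)\<^sup>2 \<partial>M) = (sd \<iota>)\<^sup>2" if "\<iota> \<in> N" for \<iota>
    using gauss_facts[OF P, of "g \<iota>" "sd \<iota>"] dist pos that by auto
  have pr: "integrable M (\<lambda>\<omega>. g \<iota> \<omega> * g \<iota>' \<omega>) \<and>
      (\<integral>\<omega>. g \<iota> \<omega> * g \<iota>' \<omega> \<partial>M) = (if \<iota> = \<iota>' then (sd \<iota>)\<^sup>2 else 0)"
    if "\<iota> \<in> N" "\<iota>' \<in> N" for \<iota> \<iota>'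
  proof (cases "\<iota> = \<iota>'")
    case True then show ?thesis using gi[OF that(1)] by (simp add: power2_eq_square)
  next
    case False
    have ind2: "indep_vars (\<lambda>_. borel) g {\<iota>, \<iota>'}"
      using indep_vars_subset[OF ind] that by auto
    have "(\<integral>\<omega>. (\<Prod>j\<in>{\<iota>,\<iota>'}. g j \<omega>) \<partial>M) = (\<Prod>j\<in>{\<iota>,\<iota>'}. \<integral>\<omega>. g j \<omega> \<partial>M)"
      "integrable M (\<lambda>\<omega>. (\<Prod>j\<in>{\<iota>,\<iota>'}. g j \<omega>))"
      using indep_vars_lebesgue_integral[OF _ ind2] indep_vars_integrable[OF _ ind2] gi that by auto
    then show ?thesis using False gi that by simp
  qed
  have exp: "(c + (\<Sum>\<iota>\<in>N. \<alpha> \<iota> * g \<iota> \<omega>))\<^sup>2 = c\<^sup>2 + (\<Sum>\<iota>\<in>N. (2 * c * \<alpha> \<iota>) * g \<iota> \<omega>)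
      + (\<Sum>\<iota>\<in>N. \<Sum>\<iota>'\<in>N. (\<alpha> \<iota> * \<alpha> \<iota>') * (g \<iota> \<omega> * g \<iota>' \<omega>))" for \<omega>
    by (simp add: power2_eq_square algebra_simps sum_distrib_left sum_distrib_right sum.distrib)
  have I1: "integrable M (\<lambda>\<omega>. \<Sum>\<iota>\<in>N. (2 * c * \<alpha> \<iota>) * g \<iota> \<omega>)"
  proof (rule Bochner_Integration.integrable_sum)
    fix \<iota> assume "\<iota> \<in> N" then show "integrable M (\<lambda>\<omega>. 2 * c * \<alpha> \<iota> * g \<iota> \<omega>)"
      using gi(1) by (intro integrable_mult_right) auto
  qed
  have I2: "integrable M (\<lambda>\<omega>. \<Sum>\<iota>\<in>N. \<Sum>\<iota>'\<in>N. (\<alpha> \<iota> * \<alpha> \<iota>') * (g \<iota> \<omega> * g \<iota>' \<omega>))"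
    using pr by (intro Bochner_Integration.integrable_sum integrable_mult_right) auto
  show "integrable M (\<lambda>\<omega>. (c + (\<Sum>\<iota>\<in>N. \<alpha> \<iota> * g \<iota> \<omega>))\<^sup>2)"
    unfolding exp using I1 I2 by auto
  have E1: "(\<integral>\<omega>. (\<Sum>\<iota>\<in>N. (2 * c * \<alpha> \<iota>) * g \<iota> \<omega>) \<partial>M) = 0"
    using gi by (subst Bochner_Integration.integral_sum) auto
  have E2: "(\<integral>\<omega>. (\<Sum>\<iota>\<in>N. \<Sum>\<iota>'\<in>N. (\<alpha> \<iota> * \<alpha> \<iota>') * (g \<iota> \<omega> * g \<iota>' \<omega>)) \<partial>M)
      = (\<Sum>\<iota>\<in>N. \<Sum>\<iota>'\<in>N. (\<alpha> \<iota> * \<alpha> \<iota>') * (if \<iota> = \<iota>' then (sd \<iota>)\<^sup>2 else 0))"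
    using pr by (simp add: Bochner_Integration.integral_sum Bochner_Integration.integrable_sum)
  also have "\<dots> = (\<Sum>\<iota>\<in>N. (\<alpha> \<iota>)\<^sup>2 * (sd \<iota>)\<^sup>2)"
    using fin by (simp add: if_distrib power2_eq_square cong: if_cong)
  finally have E2': "(\<integral>\<omega>. (\<Sum>\<iota>\<in>N. \<Sum>\<iota>'\<in>N. (\<alpha> \<iota> * \<alpha> \<iota>') * (g \<iota> \<omega> * g \<iota>' \<omega>)) \<partial>M) = (\<Sum>\<iota>\<in>N. (\<alpha> \<iota>)\<^sup>2 * (sd \<iota>)\<^sup>2)" .
  show "(\<integral>\<omega>. (c + (\<Sum>\<iota>\<in>N. \<alpha> \<iota> * g \<iota> \<omega>))\<^sup>2 \<partial>M) = c\<^sup>2 + (\<Sum>\<iota>\<in>N. (\<alpha> \<iota>)\<^sup>2 * (sd \<iota>)\<^sup>2)"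
    unfolding exp using I1 I2 E1 E2' by (simp add: prob_space)
qed




lemma two_point:
  fixes v c1 c2 :: "'v::real_inner"
  assumes "p1 + p2 \<noteq> 0"
  shows "p1 * (norm (v - c1))\<^sup>2 + p2 * (norm (v - c2))\<^sup>2 =
    (p1 + p2) * (norm (v - (1 / (p1 + p2)) *\<^sub>R (p1 *\<^sub>R c1 + p2 *\<^sub>R c2)))\<^sup>2
    + (p1 * p2 / (p1 + p2)) * (norm (c1 - c2))\<^sup>2"
proof -
  define s where "s = p1 + p2"
  have s: "s \<noteq> 0" using assms s_def by simp
  have e: "v - (1 / s) *\<^sub>R (p1 *\<^sub>R c1 + p2 *\<^sub>R c2) = (1/s) *\<^sub>R (s *\<^sub>R v - p1 *\<^sub>R c1 - p2 *\<^sub>R c2)"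
    using s by (simp add: algebra_simps)
  have "(norm ((1/s) *\<^sub>R (s *\<^sub>R v - p1 *\<^sub>R c1 - p2 *\<^sub>R c2)))\<^sup>2
     = (1/s)\<^sup>2 * (norm (s *\<^sub>R v - p1 *\<^sub>R c1 - p2 *\<^sub>R c2))\<^sup>2"
    by (simp add: power_divide power2_abs)
  moreover have "s * ((1/s)\<^sup>2 * X) = X / s" for X using s by (simp add: power2_eq_square)
  ultimately have 1: "s * (norm (v - (1 / s) *\<^sub>R (p1 *\<^sub>R c1 + p2 *\<^sub>R c2)))\<^sup>2
     = (norm (s *\<^sub>R v - p1 *\<^sub>R c1 - p2 *\<^sub>R c2))\<^sup>2 / s" unfolding e by simp
  have "s * (p1 * (norm (v - c1))\<^sup>2 + p2 * (norm (v - c2))\<^sup>2) =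
      (norm (s *\<^sub>R v - p1 *\<^sub>R c1 - p2 *\<^sub>R c2))\<^sup>2 + (p1 * p2) * (norm (c1 - c2))\<^sup>2"
    unfolding power2_norm_eq_inner s_def
    by (simp add: inner_diff_left inner_diff_right inner_add_left inner_add_right inner_commute algebra_simps)
  then have "p1 * (norm (v - c1))\<^sup>2 + p2 * (norm (v - c2))\<^sup>2 =
      (norm (s *\<^sub>R v - p1 *\<^sub>R c1 - p2 *\<^sub>R c2))\<^sup>2 / s + (p1 * p2 / s) * (norm (c1 - c2))\<^sup>2"
    using s by (simp add: field_simps)
  then show ?thesis using 1 by (simp add: s_def)
qed

lemma weighted_ss:
  fixes c :: "'k \<Rightarrow> 'v::real_inner"
  assumes fin: "finite K" and P: "(\<Sum>j\<in>K. p j) \<noteq> 0"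
  defines "mm \<equiv> (1 / (\<Sum>j\<in>K. p j)) *\<^sub>R (\<Sum>j\<in>K. p j *\<^sub>R c j)"
  shows "(\<Sum>j\<in>K. p j * (norm (v - c j))\<^sup>2) =
     (\<Sum>j\<in>K. p j) * (norm (v - mm))\<^sup>2 + (\<Sum>j\<in>K. p j * (norm (mm - c j))\<^sup>2)"
proof -
  define PP where "PP = (\<Sum>j\<in>K. p j)"
  have Pm: "PP *\<^sub>R mm = (\<Sum>j\<in>K. p j *\<^sub>R c j)" using P unfolding mm_def PP_def by simp
  have eq: "(norm (v - c j))\<^sup>2 = (norm (v - mm))\<^sup>2 + 2 * inner (v - mm) (mm - c j) + (norm (mm - c j))\<^sup>2" for j
  proof -
    have "v - c j = (v - mm) + (mm - c j)" by simp
    then show ?thesis by (metis power2_norm_eq_inner inner_add_left inner_add_right inner_commute mult_2 add.assoc)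
  qed
  have cross: "(\<Sum>j\<in>K. p j * inner (v - mm) (mm - c j)) = 0"
  proof -
    have "(\<Sum>j\<in>K. p j * inner (v - mm) (mm - c j)) = inner (v - mm) (\<Sum>j\<in>K. p j *\<^sub>R (mm - c j))"
      by (simp add: inner_sum_right)
    also have "(\<Sum>j\<in>K. p j *\<^sub>R (mm - c j)) = PP *\<^sub>R mm - (\<Sum>j\<in>K. p j *\<^sub>R c j)"
      by (simp add: PP_def scaleR_diff_right sum_subtractf scaleR_sum_left)
    finally show ?thesis using Pm by simp
  qed
  have "(\<Sum>j\<in>K. p j * (norm (v - c j))\<^sup>2) = (\<Sum>j\<in>K. p j * (norm (v - mm))\<^sup>2 + 2 * (p j * inner (v - mm) (mm - c j)) + p j * (norm (mm - c j))\<^sup>2)"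
    by (rule sum.cong) (auto simp: eq algebra_simps)
  also have "\<dots> = PP * (norm (v - mm))\<^sup>2 + 2 * (\<Sum>j\<in>K. p j * inner (v - mm) (mm - c j)) + (\<Sum>j\<in>K. p j * (norm (mm - c j))\<^sup>2)"
    by (simp add: sum.distrib sum_distrib_left sum_distrib_right PP_def)
  finally show ?thesis using cross by (simp add: PP_def)
qed




lemma matrix_inv_scaled_id:
  assumes "b \<noteq> 0"
  shows "matrix_inv ((b::real) *\<^sub>R (mat 1 :: real^'n^'n)) = (1/b) *\<^sub>R mat 1"
proof -
  let ?A = "(b::real) *\<^sub>R (mat 1 :: real^'n^'n)"
  have ex: "\<exists>A'. ?A ** A' = mat 1 \<and> A' ** ?A = mat 1"
    by (rule exI[of _ "(1/b) *\<^sub>R mat 1"]) (use assms in \<open>simp add: scalar_matrix_assoc[symmetric] matrix_scalar_ac\<close>)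
  then have "?A ** matrix_inv ?A = mat 1 \<and> matrix_inv ?A ** ?A = mat 1"
    unfolding matrix_inv_def by (rule someI_ex)
  then have "matrix_inv ?A ** ?A = mat 1" by simp
  then have "b *\<^sub>R matrix_inv ?A = mat 1" by (simp add: matrix_scalar_ac)
  then have "(1/b) *\<^sub>R (b *\<^sub>R matrix_inv ?A) = (1/b) *\<^sub>R mat 1" by simp
  then show ?thesis using assms by simp
qed

lemma sum_Xdot_sq:
  fixes X :: "nat \<Rightarrow> nat \<Rightarrow> real^'d::finite"
  shows "(\<Sum>r<m i. (X i r \<bullet> \<theta>)\<^sup>2) = \<theta> \<bullet> (gram X m i *v \<theta>)"
proof -
  have "\<theta> \<bullet> (gram X m i *v \<theta>) = (\<Sum>a\<in>UNIV. \<theta> $ a * (\<Sum>b\<in>UNIV. (\<Sum>r<m i. X i r $ a * X i r $ b) * \<theta> $ b))"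
    by (simp add: inner_vec_def gram_def matrix_vector_mult_def)
  also have "\<dots> = (\<Sum>r<m i. (\<Sum>a\<in>UNIV. X i r $ a * \<theta> $ a) * (\<Sum>b\<in>UNIV. X i r $ b * \<theta> $ b))"
    by (simp add: sum_distrib_left sum_distrib_right algebra_simps)
      (subst sum.swap, rule sum.cong, simp, subst sum.swap, simp)
  also have "\<dots> = (\<Sum>r<m i. (X i r \<bullet> \<theta>)\<^sup>2)"
    by (simp add: inner_vec_def power2_eq_square)
  finally show ?thesis by simp
qed

lemma sum_y_Xdot:
  fixes X :: "nat \<Rightarrow> nat \<Rightarrow> real^'d::finite"
  shows "(\<Sum>r<m i. yi r * (X i r \<bullet> \<theta>)) = \<theta> \<bullet> Xty X m i yi"
  by (simp add: Xty_def inner_sum_right sum_distrib_left inner_commute)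

lemma sqres_eq:
  fixes X :: "nat \<Rightarrow> nat \<Rightarrow> real^'d::finite"
  assumes b: "b > 0" and g: "gram X m i = b *\<^sub>R mat 1"
  shows "sqres X m i yi \<theta> = b * (norm (\<theta> - direct_est X m i yi))\<^sup>2
      + ((\<Sum>r<m i. (yi r)\<^sup>2) - b * (norm (direct_est X m i yi))\<^sup>2)"
proof -
  define t where "t = direct_est X m i yi"
  have t: "Xty X m i yi = b *\<^sub>R t" unfolding t_def direct_est_def g
    using b by (simp add: matrix_inv_scaled_id scaleR_matrix_vector_assoc[symmetric])
  have "sqres X m i yi \<theta> = (\<Sum>r<m i. (yi r)\<^sup>2) - 2 * (\<Sum>r<m i. yi r * (X i r \<bullet> \<theta>)) + (\<Sum>r<m i. (X i r \<bullet> \<theta>)\<^sup>2)"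
    by (simp add: sqres_def power2_diff sum_subtractf sum.distrib sum_distrib_left algebra_simps)
  also have "\<dots> = (\<Sum>r<m i. (yi r)\<^sup>2) - 2 * b * (\<theta> \<bullet> t) + b * (\<theta> \<bullet> \<theta>)"
    unfolding sum_Xdot_sq sum_y_Xdot t g by (simp add: algebra_simps scaleR_matrix_vector_assoc[symmetric])
  also have "\<dots> = b * (norm (\<theta> - t))\<^sup>2 + ((\<Sum>r<m i. (yi r)\<^sup>2) - b * (norm t)\<^sup>2)"
    by (simp add: power2_norm_eq_inner inner_diff_left inner_diff_right inner_commute algebra_simps)
  finally show ?thesis by (simp add: t_def)
qed




locale hm =
  fixes n k :: nat and cl m :: "nat \<Rightarrow> nat" and X :: "nat \<Rightarrow> nat \<Rightarrow> real^'d::finite"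
    and sb :: real and sbj sig \<beta> :: "nat \<Rightarrow> real"
  assumes n_pos: "0 < n" and cl_lt: "\<forall>i'<n. cl i' < k" and cl_ne: "\<forall>j<k. \<exists>i'<n. cl i' = j"
    and sb_pos: "sb > 0" and sbj_pos: "\<forall>j<k. sbj j > 0" and sig_pos: "\<forall>i'<n. sig i' > 0"
    and gram_eq: "\<forall>i'<n. \<beta> i' > 0 \<and> gram X m i' = \<beta> i' *\<^sub>R mat 1"
begin

definition "lam = 1 / sb\<^sup>2"
definition "gam i' = 1 / (sbj (cl i'))\<^sup>2"
definition "aa i' = \<beta> i' / (sig i')\<^sup>2"
definition "hh i' = aa i' * gam i' / (aa i' + gam i')"
definition "CC j = {x \<in> {..<n}. cl x = j}"
definition "HH j = (\<Sum>i'\<in>CC j. hh i')"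
definition "qq j = lam * HH j / (lam + HH j)"
definition "QQ = (\<Sum>j<k. qq j)"
definition SS :: "nat \<Rightarrow> (nat \<Rightarrow> real^'d) \<Rightarrow> real^'d" where "SS j t = (\<Sum>i'\<in>CC j. hh i' *\<^sub>R t i')"
definition TT :: "nat \<Rightarrow> (nat \<Rightarrow> real^'d) \<Rightarrow> real^'d" where "TT j t = (1 / HH j) *\<^sub>R SS j t"
definition wbh :: "(nat \<Rightarrow> real^'d) \<Rightarrow> real^'d" where "wbh t = (1 / QQ) *\<^sub>R (\<Sum>j<k. qq j *\<^sub>R TT j t)"
definition wloc :: "nat \<Rightarrow> real^'d \<Rightarrow> (nat \<Rightarrow> real^'d) \<Rightarrow> real^'d" where
  "wloc j wb t = (1 / (lam + HH j)) *\<^sub>R (lam *\<^sub>R wb + SS j t)"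
definition thloc :: "nat \<Rightarrow> real^'d \<Rightarrow> (nat \<Rightarrow> real^'d) \<Rightarrow> real^'d" where
  "thloc i' w t = (1 / (aa i' + gam i')) *\<^sub>R (aa i' *\<^sub>R t i' + gam i' *\<^sub>R w)"
definition wh :: "nat \<Rightarrow> (nat \<Rightarrow> real^'d) \<Rightarrow> real^'d" where "wh j t = wloc j (wbh t) t"
definition thh :: "nat \<Rightarrow> (nat \<Rightarrow> real^'d) \<Rightarrow> real^'d" where "thh i' t = thloc i' (wh (cl i') t) t"

lemma lam_pos: "lam > 0" using sb_pos by (simp add: lam_def)
lemma gam_pos: "i' < n \<Longrightarrow> gam i' > 0"
proof -
  assume "i' < n" then have "sbj (cl i') > 0" using sbj_pos cl_lt by auto
  then show ?thesis by (simp add: gam_def)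
qed
lemma aa_pos: "i' < n \<Longrightarrow> aa i' > 0"
proof -
  assume "i' < n" then have "sig i' > 0" "\<beta> i' > 0" using sig_pos gram_eq by auto
  then show ?thesis by (simp add: aa_def)
qed
lemma hh_pos: "i' < n \<Longrightarrow> hh i' > 0"
proof -
  assume "i' < n" then have "aa i' > 0" "gam i' > 0" using aa_pos gam_pos by auto
  then show ?thesis by (simp add: hh_def)
qed
lemma CC_fin: "finite (CC j)" by (simp add: CC_def)
lemma CC_lt: "i' \<in> CC j \<Longrightarrow> i' < n" by (simp add: CC_def)
lemma CC_ne: "j < k \<Longrightarrow> CC j \<noteq> {}" using cl_ne by (auto simp: CC_def)
lemma HH_pos: "j < k \<Longrightarrow> HH j > 0"
  unfolding HH_def using CC_ne CC_fin hh_pos CC_lt by (intro sum_pos) auto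
lemma qq_pos: "j < k \<Longrightarrow> qq j > 0"
proof -
  assume "j < k" then have "HH j > 0" using HH_pos by auto
  then show ?thesis using lam_pos by (simp add: qq_def)
qed
lemma k_pos: "0 < k" using n_pos cl_lt by auto
lemma QQ_pos: "QQ > 0" unfolding QQ_def using qq_pos k_pos by (intro sum_pos) auto
lemma CC_eq: "{i. i < n \<and> cl i = j} = CC j" by (auto simp: CC_def)

lemma regroup: "(\<Sum>j<k. \<Sum>i'\<in>CC j. f i') = (\<Sum>i'<n. f i')"
  unfolding CC_def using cl_lt by (intro sum.group) auto

lemma client_step:
  assumes "i' < n" and that: "t i' = direct_est X m i' yi"
  shows "sqres X m i' yi \<theta> / (2 * (sig i')\<^sup>2) + gam i' / 2 * (norm (\<theta> - w))\<^sup>2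
    = (aa i' + gam i') / 2 * (norm (\<theta> - thloc i' w t))\<^sup>2 + hh i' / 2 * (norm (w - t i'))\<^sup>2
      + ((\<Sum>r<m i'. (yi r)\<^sup>2) - \<beta> i' * (norm (t i'))\<^sup>2) / (2 * (sig i')\<^sup>2)"
proof -
  have b: "\<beta> i' > 0" "gram X m i' = \<beta> i' *\<^sub>R mat 1" using gram_eq assms(1) by auto
  have s: "sig i' > 0" using sig_pos assms(1) by auto
  have sq: "sqres X m i' yi \<theta> / (2 * (sig i')\<^sup>2) = aa i' / 2 * (norm (\<theta> - t i'))\<^sup>2
     + ((\<Sum>r<m i'. (yi r)\<^sup>2) - \<beta> i' * (norm (t i'))\<^sup>2) / (2 * (sig i')\<^sup>2)"
    unfolding sqres_eq[OF b] that[symmetric] aa_def using s by (simp add: field_simps)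
  have tp: "aa i' * (norm (\<theta> - t i'))\<^sup>2 + gam i' * (norm (\<theta> - w))\<^sup>2 =
      (aa i' + gam i') * (norm (\<theta> - thloc i' w t))\<^sup>2 + hh i' * (norm (w - t i'))\<^sup>2"
    using two_point[of "aa i'" "gam i'" \<theta> "t i'" w] aa_pos[OF assms(1)] gam_pos[OF assms(1)]
    unfolding thloc_def hh_def by (simp add: norm_minus_commute)
  show ?thesis using sq tp by (simp add: field_simps)
qed

lemma cluster_step:
  assumes "j < k"
  shows "lam / 2 * (norm (w - wb))\<^sup>2 + (\<Sum>i'\<in>CC j. hh i' / 2 * (norm (w - t i'))\<^sup>2)
     = (lam + HH j) / 2 * (norm (w - wloc j wb t))\<^sup>2 + qq j / 2 * (norm (wb - TT j t))\<^sup>2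
       + (\<Sum>i'\<in>CC j. hh i' / 2 * (norm (TT j t - t i'))\<^sup>2)"
proof -
  have H: "HH j > 0" using HH_pos assms by simp
  have w1: "(\<Sum>i'\<in>CC j. hh i' * (norm (w - t i'))\<^sup>2) = HH j * (norm (w - TT j t))\<^sup>2
      + (\<Sum>i'\<in>CC j. hh i' * (norm (TT j t - t i'))\<^sup>2)"
    using weighted_ss[OF CC_fin, where p=hh and v=w and c=t] H unfolding TT_def SS_def HH_def by simp
  have HT: "HH j *\<^sub>R TT j t = SS j t" using H by (simp add: TT_def)
  have w2: "lam * (norm (w - wb))\<^sup>2 + HH j * (norm (w - TT j t))\<^sup>2 =
     (lam + HH j) * (norm (w - wloc j wb t))\<^sup>2 + qq j * (norm (wb - TT j t))\<^sup>2"
    using two_point[of lam "HH j" w wb "TT j t"] lam_pos H unfolding wloc_def qq_def HT by simp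
  have "(\<Sum>i'\<in>CC j. hh i' / 2 * (norm (w - t i'))\<^sup>2) = (\<Sum>i'\<in>CC j. hh i' * (norm (w - t i'))\<^sup>2) / 2"
    by (simp add: sum_divide_distrib)
  moreover have "(\<Sum>i'\<in>CC j. hh i' / 2 * (norm (TT j t - t i'))\<^sup>2) = (\<Sum>i'\<in>CC j. hh i' * (norm (TT j t - t i'))\<^sup>2) / 2"
    by (simp add: sum_divide_distrib)
  ultimately show ?thesis using w1 w2 by (simp add: field_simps)
qed

lemma top_step:
  "(\<Sum>j<k. qq j / 2 * (norm (wb - TT j t))\<^sup>2) = QQ / 2 * (norm (wb - wbh t))\<^sup>2
     + (\<Sum>j<k. qq j / 2 * (norm (wbh t - TT j t))\<^sup>2)"
proof -
  have "(\<Sum>j<k. qq j * (norm (wb - TT j t))\<^sup>2) = QQ * (norm (wb - wbh t))\<^sup>2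
     + (\<Sum>j<k. qq j * (norm (wbh t - TT j t))\<^sup>2)"
    using weighted_ss[where K="{..<k}" and p=qq and v=wb and c="\<lambda>j. TT j t"] QQ_pos unfolding wbh_def QQ_def by simp
  then show ?thesis by (simp add: sum_divide_distrib[symmetric] field_simps)
qed

definition Phi :: "(nat \<Rightarrow> real^'d) \<Rightarrow> (nat \<Rightarrow> real^'d) \<Rightarrow> real^'d \<Rightarrow> (nat \<Rightarrow> real^'d) \<Rightarrow> real" where
  "Phi \<theta> w wb t = (\<Sum>j<k. \<Sum>i'\<in>CC j. (aa i' + gam i') / 2 * (norm (\<theta> i' - thloc i' (w j) t))\<^sup>2)
     + (\<Sum>j<k. (lam + HH j) / 2 * (norm (w j - wloc j wb t))\<^sup>2) + QQ / 2 * (norm (wb - wbh t))\<^sup>2"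

definition Rem :: "(nat \<Rightarrow> nat \<Rightarrow> real) \<Rightarrow> (nat \<Rightarrow> real^'d) \<Rightarrow> real" where
  "Rem y t = (\<Sum>j<k. \<Sum>i'\<in>CC j. ((\<Sum>r<m i'. (y i' r)\<^sup>2) - \<beta> i' * (norm (t i'))\<^sup>2) / (2 * (sig i')\<^sup>2))
     + (\<Sum>j<k. \<Sum>i'\<in>CC j. hh i' / 2 * (norm (TT j t - t i'))\<^sup>2)
     + (\<Sum>j<k. qq j / 2 * (norm (wbh t - TT j t))\<^sup>2)"

lemma obj_decomp:
  assumes t: "\<forall>i'<n. t i' = direct_est X m i' (y i')"
  shows "objective k n m X cl (\<lambda>_. 1 / sb\<^sup>2) (\<lambda>i'. 1 / (sbj (cl i'))\<^sup>2) sig y \<theta> w wb = Phi \<theta> w wb t + Rem y t"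
proof -
  define K where "K i' = ((\<Sum>r<m i'. (y i' r)\<^sup>2) - \<beta> i' * (norm (t i'))\<^sup>2) / (2 * (sig i')\<^sup>2)" for i'
  have "objective k n m X cl (\<lambda>_. 1 / sb\<^sup>2) (\<lambda>i'. 1 / (sbj (cl i'))\<^sup>2) sig y \<theta> w wb =
     (\<Sum>j<k. lam / 2 * (norm (w j - wb))\<^sup>2 + (\<Sum>i'\<in>CC j. sqres X m i' (y i') (\<theta> i') / (2 * (sig i')\<^sup>2)
        + gam i' / 2 * (norm (\<theta> i' - w j))\<^sup>2))"
    by (simp add: objective_def CC_eq lam_def gam_def)
  also have "\<dots> = (\<Sum>j<k. lam / 2 * (norm (w j - wb))\<^sup>2 + (\<Sum>i'\<in>CC j.
       (aa i' + gam i') / 2 * (norm (\<theta> i' - thloc i' (w j) t))\<^sup>2 + hh i' / 2 * (norm (w j - t i'))\<^sup>2 + K i'))"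
  proof (rule sum.cong[OF refl])
    fix j assume "j \<in> {..<k}"
    show "lam / 2 * (norm (w j - wb))\<^sup>2 + (\<Sum>i'\<in>CC j. sqres X m i' (y i') (\<theta> i') / (2 * (sig i')\<^sup>2)
        + gam i' / 2 * (norm (\<theta> i' - w j))\<^sup>2) = lam / 2 * (norm (w j - wb))\<^sup>2 + (\<Sum>i'\<in>CC j.
       (aa i' + gam i') / 2 * (norm (\<theta> i' - thloc i' (w j) t))\<^sup>2 + hh i' / 2 * (norm (w j - t i'))\<^sup>2 + K i')"
    proof (rule arg_cong[where f="\<lambda>x. _ + x"], rule sum.cong[OF refl])
      fix i' assume "i' \<in> CC j"
      then have "i' < n" by (rule CC_lt)
      then show "sqres X m i' (y i') (\<theta> i') / (2 * (sig i')\<^sup>2) + gam i' / 2 * (norm (\<theta> i' - w j))\<^sup>2 =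
        (aa i' + gam i') / 2 * (norm (\<theta> i' - thloc i' (w j) t))\<^sup>2 + hh i' / 2 * (norm (w j - t i'))\<^sup>2 + K i'"
        unfolding K_def using t by (intro client_step) auto
    qed
  qed
  also have "\<dots> = (\<Sum>j<k. (\<Sum>i'\<in>CC j. (aa i' + gam i') / 2 * (norm (\<theta> i' - thloc i' (w j) t))\<^sup>2)
       + (lam / 2 * (norm (w j - wb))\<^sup>2 + (\<Sum>i'\<in>CC j. hh i' / 2 * (norm (w j - t i'))\<^sup>2)) + (\<Sum>i'\<in>CC j. K i'))"
    by (intro sum.cong refl) (simp add: sum.distrib)
  also have "\<dots> = (\<Sum>j<k. (\<Sum>i'\<in>CC j. (aa i' + gam i') / 2 * (norm (\<theta> i' - thloc i' (w j) t))\<^sup>2)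
       + ((lam + HH j) / 2 * (norm (w j - wloc j wb t))\<^sup>2 + qq j / 2 * (norm (wb - TT j t))\<^sup>2
       + (\<Sum>i'\<in>CC j. hh i' / 2 * (norm (TT j t - t i'))\<^sup>2)) + (\<Sum>i'\<in>CC j. K i'))"
    using cluster_step by (intro sum.cong refl) simp
  also have "\<dots> = (\<Sum>j<k. \<Sum>i'\<in>CC j. (aa i' + gam i') / 2 * (norm (\<theta> i' - thloc i' (w j) t))\<^sup>2)
       + (\<Sum>j<k. (lam + HH j) / 2 * (norm (w j - wloc j wb t))\<^sup>2) + (\<Sum>j<k. qq j / 2 * (norm (wb - TT j t))\<^sup>2)
       + (\<Sum>j<k. \<Sum>i'\<in>CC j. hh i' / 2 * (norm (TT j t - t i'))\<^sup>2) + (\<Sum>j<k. \<Sum>i'\<in>CC j. K i')"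
    by (simp add: sum.distrib)
  also have "\<dots> = Phi \<theta> w wb t + Rem y t"
  proof -
    have ac: "a + b + c + d + e = (a + b + q) + (e + d + f)" if "c = q + f" for a b c d e q f :: real
      using that by simp
    show ?thesis unfolding Phi_def Rem_def K_def by (rule ac[OF top_step])
  qed
  finally show ?thesis .
qed


lemma Phi_terms_nonneg:
  "\<And>j i'. i' \<in> CC j \<Longrightarrow> (aa i' + gam i') / 2 * (norm (\<theta> i' - thloc i' (w j) t))\<^sup>2 \<ge> 0"
  "\<And>j. j < k \<Longrightarrow> (lam + HH j) / 2 * (norm (w j - wloc j wb t))\<^sup>2 \<ge> 0"
  "QQ / 2 * (norm (wb - wbh t))\<^sup>2 \<ge> 0"
proof -
  fix j i' assume "i' \<in> CC j"
  then have "aa i' > 0" "gam i' > 0" using aa_pos gam_pos CC_lt by auto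
  then show "(aa i' + gam i') / 2 * (norm (\<theta> i' - thloc i' (w j) t))\<^sup>2 \<ge> 0" by simp
next
  fix j assume "j < k"
  then have "HH j > 0" using HH_pos by auto
  then show "(lam + HH j) / 2 * (norm (w j - wloc j wb t))\<^sup>2 \<ge> 0" using lam_pos by simp
next
  show "QQ / 2 * (norm (wb - wbh t))\<^sup>2 \<ge> 0" using QQ_pos by simp
qed

lemma Phi_nonneg: "Phi \<theta> w wb t \<ge> 0"
  unfolding Phi_def
  by (intro add_nonneg_nonneg sum_nonneg Phi_terms_nonneg) auto

lemma Phi_zero:
  assumes "\<forall>i'<n. thh' i' = thh i' t"
  shows "Phi thh' (\<lambda>j. wh j t) (wbh t) t = 0"
proof -
  have "thh' i' - thloc i' (wh j t) t = 0" if "i' \<in> CC j" for i' j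
  proof -
    have "i' < n" "cl i' = j" using that by (auto simp: CC_def)
    then show ?thesis using assms by (simp add: thh_def)
  qed
  then have 1: "(\<Sum>j<k. \<Sum>i'\<in>CC j. (aa i' + gam i') / 2 * (norm (thh' i' - thloc i' (wh j t) t))\<^sup>2) = 0"
    by (intro sum.neutral ballI) simp
  show ?thesis unfolding Phi_def 1 by (simp add: wh_def)
qed

lemma Phi_zero_imp:
  assumes le: "Phi \<theta> w wb t \<le> 0" and i: "i' < n"
  shows "\<theta> i' = thh i' t"
proof -
  let ?A = "\<lambda>j. \<Sum>i'\<in>CC j. (aa i' + gam i') / 2 * (norm (\<theta> i' - thloc i' (w j) t))\<^sup>2"
  let ?B = "\<lambda>j. (lam + HH j) / 2 * (norm (w j - wloc j wb t))\<^sup>2"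
  have nA: "\<forall>j\<in>{..<k}. ?A j \<ge> 0" by (intro ballI sum_nonneg Phi_terms_nonneg)
  have nB: "\<forall>j\<in>{..<k}. ?B j \<ge> 0" by (intro ballI Phi_terms_nonneg) simp
  have nn1: "sum ?A {..<k} \<ge> 0" by (rule sum_nonneg) (use nA in blast)
  have nn2: "sum ?B {..<k} \<ge> 0" by (rule sum_nonneg) (use nB in blast)
  have nn3: "QQ / 2 * (norm (wb - wbh t))\<^sup>2 \<ge> 0" by (rule Phi_terms_nonneg)
  have z1: "sum ?A {..<k} = 0" and z2: "sum ?B {..<k} = 0" and z3: "QQ / 2 * (norm (wb - wbh t))\<^sup>2 = 0"
    using le nn1 nn2 nn3 unfolding Phi_def by linarith+
  have wb: "wb = wbh t" using z3 QQ_pos by simp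
  have j: "cl i' < k" using cl_lt i by auto
  have "\<forall>j\<in>{..<k}. ?B j = 0" using sum_nonneg_eq_0_iff[of "{..<k}" ?B] z2 nB by blast
  then have "?B (cl i') = 0" using j by blast
  then have w: "w (cl i') = wh (cl i') t" using lam_pos HH_pos[OF j] wb by (simp add: wh_def)
  have "\<forall>j\<in>{..<k}. ?A j = 0" using sum_nonneg_eq_0_iff[of "{..<k}" ?A] z1 nA by blast
  then have "?A (cl i') = 0" using j by blast
  moreover have "\<forall>i''\<in>CC (cl i'). (aa i'' + gam i'') / 2 * (norm (\<theta> i'' - thloc i'' (w (cl i')) t))\<^sup>2 \<ge> 0"
    by (intro ballI Phi_terms_nonneg)
  ultimately have "\<forall>i''\<in>CC (cl i'). (aa i'' + gam i'') / 2 * (norm (\<theta> i'' - thloc i'' (w (cl i')) t))\<^sup>2 = 0"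
    using sum_nonneg_eq_0_iff[OF CC_fin, of "cl i'" "\<lambda>i''. (aa i'' + gam i'') / 2 * (norm (\<theta> i'' - thloc i'' (w (cl i')) t))\<^sup>2"] by blast
  moreover have "i' \<in> CC (cl i')" using i by (simp add: CC_def)
  ultimately have "(aa i' + gam i') / 2 * (norm (\<theta> i' - thloc i' (w (cl i')) t))\<^sup>2 = 0" by blast
  moreover have "aa i' + gam i' > 0" using aa_pos[OF i] gam_pos[OF i] by simp
  ultimately show ?thesis using w by (simp add: thh_def)
qed

lemma hier_est_eq:
  assumes t: "\<forall>i'<n. t i' = direct_est X m i' (y i')" and i: "i' < n"
  shows "hier_est k n m X cl (\<lambda>_. 1 / sb\<^sup>2) (\<lambda>i'. 1 / (sbj (cl i'))\<^sup>2) sig y i' = thh i' t"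
proof -
  define obj where "obj = objective k n m X cl (\<lambda>_. 1 / sb\<^sup>2) (\<lambda>i'. 1 / (sbj (cl i'))\<^sup>2) sig y"
  have od: "obj \<theta> w wb = Phi \<theta> w wb t + Rem y t" for \<theta> w wb
    unfolding obj_def by (rule obj_decomp[OF t])
  have p0: "Phi (\<lambda>i'. thh i' t) (\<lambda>j. wh j t) (wbh t) t = 0" by (rule Phi_zero) simp
  define P where "P = (\<lambda>\<theta>. \<exists>w wb. \<forall>\<theta>' w' wb'. obj \<theta> w wb \<le> obj \<theta>' w' wb')"
  have "P (\<lambda>i'. thh i' t)"
    unfolding P_def
  proof (intro exI allI)
    fix \<theta>' w' wb'
    show "obj (\<lambda>i'. thh i' t) (\<lambda>j. wh j t) (wbh t) \<le> obj \<theta>' w' wb'"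
      unfolding od p0 using Phi_nonneg[of \<theta>' w' wb' t] by linarith
  qed
  then have "P (SOME \<theta>. P \<theta>)" by (rule someI[where P=P])
  moreover have "hier_est k n m X cl (\<lambda>_. 1 / sb\<^sup>2) (\<lambda>i'. 1 / (sbj (cl i'))\<^sup>2) sig y = (SOME \<theta>. P \<theta>)"
    unfolding hier_est_def P_def obj_def by (rule refl)
  ultimately obtain w wb where "\<forall>\<theta>' w' wb'. obj (hier_est k n m X cl (\<lambda>_. 1 / sb\<^sup>2) (\<lambda>i'. 1 / (sbj (cl i'))\<^sup>2) sig y) w wb \<le> obj \<theta>' w' wb'"
    unfolding P_def by auto
  then have "obj (hier_est k n m X cl (\<lambda>_. 1 / sb\<^sup>2) (\<lambda>i'. 1 / (sbj (cl i'))\<^sup>2) sig y) w wb \<le> obj (\<lambda>i'. thh i' t) (\<lambda>j. wh j t) (wbh t)"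
    by blast
  then have "Phi (hier_est k n m X cl (\<lambda>_. 1 / sb\<^sup>2) (\<lambda>i'. 1 / (sbj (cl i'))\<^sup>2) sig y) w wb t \<le> 0"
    unfolding od p0 by linarith
  then show ?thesis using Phi_zero_imp i by blast
qed

definition "kap1 i = gam i / ((aa i + gam i) * (lam + HH (cl i)))"
definition "cc i i' = (if i' = i then aa i / (aa i + gam i) else 0)
   + kap1 i * (lam / QQ * (qq (cl i') / HH (cl i')) * hh i' + (if cl i' = cl i then hh i' else 0))"

lemma SS_lin: "SS j t = (\<Sum>i'<n. (if cl i' = j then hh i' else 0) *\<^sub>R t i')"
  unfolding SS_def CC_def by (simp add: sum.inter_filter[symmetric] if_distrib[of "\<lambda>x. x *\<^sub>R _"] cong: if_cong)

lemma HH_lin: "HH j = (\<Sum>i'<n. (if cl i' = j then hh i' else 0))"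
  unfolding HH_def CC_def by (simp add: sum.inter_filter[symmetric])

lemma wbh_lin: "wbh t = (\<Sum>i'<n. (qq (cl i') / (QQ * HH (cl i')) * hh i') *\<^sub>R t i')"
proof -
  have "(\<Sum>j<k. qq j *\<^sub>R TT j t) = (\<Sum>j<k. \<Sum>i'\<in>CC j. (qq (cl i') / HH (cl i') * hh i') *\<^sub>R t i')"
  proof (rule sum.cong[OF refl])
    fix j assume "j \<in> {..<k}"
    have "qq j *\<^sub>R TT j t = (\<Sum>i'\<in>CC j. (qq j / HH j * hh i') *\<^sub>R t i')"
      unfolding TT_def SS_def by (simp add: scaleR_sum_right)
    also have "\<dots> = (\<Sum>i'\<in>CC j. (qq (cl i') / HH (cl i') * hh i') *\<^sub>R t i')"
      by (rule sum.cong) (auto simp: CC_def)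
    finally show "qq j *\<^sub>R TT j t = (\<Sum>i'\<in>CC j. (qq (cl i') / HH (cl i') * hh i') *\<^sub>R t i')" .
  qed
  also have "\<dots> = (\<Sum>i'<n. (qq (cl i') / HH (cl i') * hh i') *\<^sub>R t i')" by (rule regroup)
  finally show ?thesis unfolding wbh_def by (simp add: scaleR_sum_right)
qed

lemma sum_qq_hh: "(\<Sum>i'<n. qq (cl i') / HH (cl i') * hh i') = QQ"
proof -
  have "(\<Sum>i'<n. qq (cl i') / HH (cl i') * hh i') = (\<Sum>j<k. \<Sum>i'\<in>CC j. qq (cl i') / HH (cl i') * hh i')"
    by (rule regroup[symmetric])
  also have "\<dots> = (\<Sum>j<k. qq j)"
  proof (rule sum.cong[OF refl])
    fix j assume j: "j \<in> {..<k}"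
    have "(\<Sum>i'\<in>CC j. qq (cl i') / HH (cl i') * hh i') = (\<Sum>i'\<in>CC j. qq j / HH j * hh i')"
      by (rule sum.cong) (auto simp: CC_def)
    also have "\<dots> = qq j / HH j * HH j" by (simp add: HH_def sum_distrib_left)
    also have "\<dots> = qq j" using HH_pos[of j] j by simp
    finally show "(\<Sum>i'\<in>CC j. qq (cl i') / HH (cl i') * hh i') = qq j" .
  qed
  finally show ?thesis by (simp add: QQ_def)
qed

lemma thh_lin:
  assumes i: "i < n"
  shows "thh i t = (\<Sum>i'<n. cc i i' *\<^sub>R t i')"
proof -
  define A where "A = aa i / (aa i + gam i)"
  define B where "B = kap1 i * lam / QQ"
  have ti: "t i = (\<Sum>i'<n. (if i' = i then 1 else 0) *\<^sub>R t i')"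
    using i by (simp add: if_distrib[of "\<lambda>x. x *\<^sub>R _"] cong: if_cong)
  have ag: "aa i + gam i > 0" using aa_pos[OF i] gam_pos[OF i] by simp
  have J: "cl i < k" using i cl_lt by auto
  have lh: "lam + HH (cl i) > 0" using lam_pos HH_pos[OF J] by simp
  have "thh i t = A *\<^sub>R t i + B *\<^sub>R (\<Sum>i'<n. (qq (cl i') / HH (cl i') * hh i') *\<^sub>R t i')
        + kap1 i *\<^sub>R SS (cl i) t"
  proof -
    have "thh i t = A *\<^sub>R t i + (gam i / (aa i + gam i) / (lam + HH (cl i)) * lam) *\<^sub>R wbh t
        + (gam i / (aa i + gam i) / (lam + HH (cl i))) *\<^sub>R SS (cl i) t"
      unfolding thh_def thloc_def wh_def wloc_def A_def by (simp add: scaleR_add_right)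
    moreover have "wbh t = (1/QQ) *\<^sub>R (\<Sum>i'<n. (qq (cl i') / HH (cl i') * hh i') *\<^sub>R t i')"
      unfolding wbh_lin by (simp add: scaleR_sum_right)
    ultimately show ?thesis unfolding B_def kap1_def by (simp add: field_simps)
  qed
  also have "\<dots> = (\<Sum>i'<n. cc i i' *\<^sub>R t i')"
    unfolding ti SS_lin cc_def A_def[symmetric]
    by (simp add: scaleR_sum_right sum.distrib[symmetric] scaleR_add_left B_def algebra_simps)
      (rule sum.cong; simp)
  finally show ?thesis .
qed

lemma cc_sum:
  assumes i: "i < n"
  shows "(\<Sum>i'<n. cc i i') = 1"
proof -
  have ag: "aa i + gam i > 0" using aa_pos[OF i] gam_pos[OF i] by simp
  have J: "cl i < k" using i cl_lt by auto
  have lh: "lam + HH (cl i) > 0" using lam_pos HH_pos[OF J] by simp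
  have "(\<Sum>i'<n. cc i i') = aa i / (aa i + gam i) + kap1 i * (lam / QQ * (\<Sum>i'<n. qq (cl i') / HH (cl i') * hh i') + HH (cl i))"
    unfolding cc_def HH_lin using i
    by (simp add: sum.distrib sum_distrib_left sum_distrib_right algebra_simps)
  also have "\<dots> = aa i / (aa i + gam i) + kap1 i * (lam + HH (cl i))"
    unfolding sum_qq_hh using QQ_pos by simp
  also have "kap1 i * (lam + HH (cl i)) = gam i / (aa i + gam i)"
    unfolding kap1_def using ag lh by simp
  also have "aa i / (aa i + gam i) + gam i / (aa i + gam i) = 1"
    using ag by (simp add: add_divide_distrib[symmetric])
  finally show ?thesis .
qed

definition "VV i' i'' = sb\<^sup>2 * (if cl i' = cl i'' then 1 else 0) + (if i' = i'' then 1 / gam i' + 1 / aa i' else 0)"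
definition "vv i i'' = sb\<^sup>2 * (if cl i'' = cl i then 1 else 0) + (if i'' = i then 1 / gam i else 0)"

lemma sb_lam: "sb\<^sup>2 = 1 / lam" using sb_pos by (simp add: lam_def)

lemma ccJ:
  assumes i: "i < n"
  shows "(\<Sum>i'<n. if cl i' = j then cc i i' else 0) = (if cl i = j then aa i / (aa i + gam i) else 0)
     + kap1 i * (lam / QQ * (qq j / HH j) * HH j + (if j = cl i then HH j else 0))"
proof -
  define A where "A = aa i / (aa i + gam i)"
  define c where "c = lam / QQ * (qq j / HH j)"
  define f1 where "f1 i' = (if i' = i \<and> cl i = j then A else 0)" for i'
  define f2 where "f2 i' = (if cl i' = j then hh i' else 0)" for i'
  define g where "g i' = (if j = cl i then f2 i' else 0)" for i'
  have "(\<Sum>i'<n. if cl i' = j then cc i i' else 0) = (\<Sum>i'<n. f1 i' + kap1 i * (c * f2 i' + g i'))"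
    by (rule sum.cong) (auto simp: cc_def f1_def f2_def g_def c_def A_def)
  also have "\<dots> = sum f1 {..<n} + kap1 i * (c * sum f2 {..<n} + sum g {..<n})"
    by (simp only: sum.distrib sum_distrib_left[symmetric])
  also have "sum f1 {..<n} = (if cl i = j then A else 0)"
    using i unfolding f1_def by (cases "cl i = j") auto
  also have "sum f2 {..<n} = HH j" unfolding f2_def HH_lin ..
  also have "sum g {..<n} = (if j = cl i then HH j else 0)"
    unfolding g_def using \<open>sum f2 {..<n} = HH j\<close> by simp
  finally show ?thesis unfolding A_def c_def .
qed

lemma K_ident:
  assumes i: "i < n" and i2: "i'' < n"
  shows "(\<Sum>i'<n. cc i i' * VV i' i'') - vv i i'' = kap1 i * lam / QQ"
proof -
  define A where "A = aa i / (aa i + gam i)"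
  define J where "J = cl i"
  define J2 where "J2 = cl i''"
  have J: "J < k" and J2: "J2 < k" using i i2 cl_lt by (auto simp: J_def J2_def)
  have ag: "aa i > 0" "gam i > 0" using aa_pos[OF i] gam_pos[OF i] by auto
  have ag2: "aa i'' > 0" "gam i'' > 0" using aa_pos[OF i2] gam_pos[OF i2] by auto
  have H: "HH J > 0" "HH J2 > 0" using HH_pos J J2 by auto
  have lm: "lam > 0" by (rule lam_pos)
  have Q: "QQ > 0" by (rule QQ_pos)
  have sum1: "(\<Sum>i'<n. cc i i' * VV i' i'') = sb\<^sup>2 * (\<Sum>i'<n. if cl i' = J2 then cc i i' else 0)
      + cc i i'' * (1 / gam i'' + 1 / aa i'')"
  proof -
    have "(\<Sum>i'<n. cc i i' * VV i' i'') = (\<Sum>i'<n. sb\<^sup>2 * (if cl i' = J2 then cc i i' else 0)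
         + (if i' = i'' then cc i i' * (1 / gam i'' + 1 / aa i'') else 0))"
      by (rule sum.cong) (auto simp: VV_def J2_def algebra_simps)
    then show ?thesis using i2 by (simp add: sum.distrib sum_distrib_left)
  qed
  have hinv: "1 / gam i'' + 1 / aa i'' = 1 / hh i''"
    using ag2 unfolding hh_def by (simp add: field_simps)
  have e1: "A * (1 / gam i + 1 / aa i) = 1 / gam i"
  proof -
    have "1 / gam i + 1 / aa i = (aa i + gam i) / (aa i * gam i)" using ag by (simp add: field_simps)
    then show ?thesis unfolding A_def using ag by simp
  qed
  have e2: "qq J2 / HH J2 * HH J2 = qq J2" using H by simp
  have e2': "qq J2 * (sb\<^sup>2 + 1 / HH J2) = 1"
  proof -
    have "1 / lam + 1 / HH J2 = (lam + HH J2) / (lam * HH J2)" using H lm by (simp add: field_simps)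
    then show ?thesis unfolding sb_lam qq_def using H lm by simp
  qed
  have e3: "sb\<^sup>2 * (A - 1) + kap1 i * (sb\<^sup>2 * HH J + 1) = 0"
  proof -
    have 1: "sb\<^sup>2 * HH J + 1 = (lam + HH J) / lam" unfolding sb_lam using lm by (simp add: field_simps)
    have 2: "kap1 i * ((lam + HH J) / lam) = gam i / ((aa i + gam i) * lam)"
      unfolding kap1_def J_def[symmetric] using H lm ag by simp
    have 3: "A - 1 = - (gam i / (aa i + gam i))" unfolding A_def using ag by (simp add: field_simps)
    show ?thesis by (simp only: 1 2 3) (simp add: sb_lam)
  qed
  have cc2: "cc i i'' = (if i'' = i then A else 0) + kap1 i * (lam / QQ * (qq J2 / HH J2) * hh i'' + (if J2 = J then hh i'' else 0))"
    by (simp add: cc_def A_def J_def J2_def)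
  have hh2: "hh i'' > 0" using hh_pos[OF i2] .
  have "(\<Sum>i'<n. cc i i' * VV i' i'') - vv i i'' =
     sb\<^sup>2 * ((if J = J2 then A else 0) + kap1 i * (lam / QQ * qq J2 + (if J2 = J then HH J2 else 0)))
     + ((if i'' = i then A else 0) + kap1 i * (lam / QQ * (qq J2 / HH J2) * hh i'' + (if J2 = J then hh i'' else 0))) / hh i''
     - (sb\<^sup>2 * (if J2 = J then 1 else 0) + (if i'' = i then 1 / gam i else 0))"
    unfolding sum1 ccJ[OF i] hinv cc2 e2 using hh2 H[unfolded J2_def J_def]
    by (simp add: vv_def A_def J_def J2_def)
  also have "\<dots> = kap1 i * (lam / QQ) * (qq J2 * (sb\<^sup>2 + 1 / HH J2))
       + (if J2 = J then sb\<^sup>2 * (A - 1) + kap1 i * (sb\<^sup>2 * HH J2 + 1) else 0)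
       + (if i'' = i then A / hh i'' - 1 / gam i else 0)"
    using hh2 by (cases "J2 = J"; cases "i'' = i") (simp_all add: field_simps eq_commute[of J J2], simp_all add: add_divide_distrib divide_divide_eq_left)
  also have "\<dots> = kap1 i * lam / QQ"
  proof -
    have "(if J2 = J then sb\<^sup>2 * (A - 1) + kap1 i * (sb\<^sup>2 * HH J2 + 1) else 0) = 0" using e3 by auto
    moreover have "(if i'' = i then A / hh i'' - 1 / gam i else 0) = 0"
    proof (cases "i'' = i")
      case True
      have "1 / hh i = 1 / gam i + 1 / aa i" using hinv True by simp
      then have "A / hh i = 1 / gam i" using e1 by (simp add: divide_inverse)
      then show ?thesis using True by simp
    qed simp
    ultimately show ?thesis using e2' by simp
  qed
  finally show ?thesis .
qed

end



context hm begin

definition NN :: "'d noise_idx set" where "NN = noise_set k n m"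
definition sd :: "'d noise_idx \<Rightarrow> real" where "sd = noise_sd sb sbj sig cl"
definition dl :: "'d noise_idx \<Rightarrow> 'd noise_idx \<Rightarrow> real" where "dl \<iota>0 \<iota> = (if \<iota> = \<iota>0 then 1 else 0)"
definition lsum :: "('d noise_idx \<Rightarrow> real) \<Rightarrow> ('d noise_idx \<Rightarrow> real) \<Rightarrow> real" where
  "lsum F \<alpha> = (\<Sum>\<iota>\<in>NN. \<alpha> \<iota> * F \<iota>)"

lemma NN_fin: "finite NN"
proof -
  have "NN \<subseteq> (\<lambda>(j, c). ClustN j c) ` ({..<k} \<times> UNIV) \<union> (\<lambda>(i, c). ClientN i c) ` ({..<n} \<times> UNIV)
     \<union> (\<lambda>(i, r). ObsN i r) ` (SIGMA i:{..<n}. {..<m i})"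
    unfolding NN_def noise_set_def by auto
  moreover have "finite ((\<lambda>(j, c). ClustN j c) ` ({..<k} \<times> (UNIV :: 'd set)) \<union> (\<lambda>(i, c). ClientN i c) ` ({..<n} \<times> (UNIV :: 'd set))
     \<union> (\<lambda>(i, r). ObsN i r) ` (SIGMA i:{..<n}. {..<m i}))"
    by auto
  ultimately show ?thesis by (rule finite_subset)
qed

lemma NN_mem[simp]:
  "ClustN j c \<in> NN \<longleftrightarrow> j < k" "ClientN i' c \<in> NN \<longleftrightarrow> i' < n" "ObsN i' r \<in> NN \<longleftrightarrow> i' < n \<and> r < m i'"
  by (auto simp: NN_def noise_set_def)

lemma sd_simps[simp]:
  "sd (ClustN j c) = sb" "sd (ClientN i' c) = sbj (cl i')" "sd (ObsN i' r) = sig i'"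
  by (simp_all add: sd_def noise_sd_def)

lemma lsum_add: "lsum F (\<lambda>\<iota>. f \<iota> + g \<iota>) = lsum F f + lsum F g"
  by (simp add: lsum_def algebra_simps sum.distrib)
lemma lsum_diff: "lsum F (\<lambda>\<iota>. f \<iota> - g \<iota>) = lsum F f - lsum F g"
  by (simp add: lsum_def algebra_simps sum_subtractf)
lemma lsum_scale: "lsum F (\<lambda>\<iota>. c * f \<iota>) = c * lsum F f"
  by (simp add: lsum_def sum_distrib_left algebra_simps)
lemma lsum_sum: "lsum F (\<lambda>\<iota>. \<Sum>x\<in>K. f x \<iota>) = (\<Sum>x\<in>K. lsum F (f x))"
  by (simp add: lsum_def sum_distrib_right sum.swap[of _ NN])
lemma lsum_dl: "\<iota>0 \<in> NN \<Longrightarrow> lsum F (dl \<iota>0) = F \<iota>0"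
  using NN_fin by (simp add: lsum_def dl_def if_distrib[of "\<lambda>x. x * _"] cong: if_cong)

definition "pr \<alpha> \<alpha>' = lsum (\<lambda>\<iota>. \<alpha>' \<iota> * (sd \<iota>)\<^sup>2) \<alpha>"

lemma pr_sym: "pr \<alpha> \<alpha>' = pr \<alpha>' \<alpha>"
  by (simp add: pr_def lsum_def algebra_simps)
lemma pr_nonneg: "pr \<alpha> \<alpha> \<ge> 0"
  unfolding pr_def lsum_def by (intro sum_nonneg) (metis mult.assoc mult_nonneg_nonneg zero_le_power2 zero_le_square)

definition "a\<theta> i' b \<iota> = dl (ClustN (cl i') b) \<iota> + dl (ClientN i' b) \<iota>"
definition "aT i' b \<iota> = a\<theta> i' b \<iota> + (\<Sum>r<m i'. (X i' r $ b / \<beta> i') * dl (ObsN i' r) \<iota>)"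
definition "ay i' r \<iota> = (\<Sum>b\<in>UNIV. X i' r $ b * a\<theta> i' b \<iota>) + dl (ObsN i' r) \<iota>"

lemma lsum_a\<theta>: "i' < n \<Longrightarrow> lsum F (a\<theta> i' b) = F (ClustN (cl i') b) + F (ClientN i' b)"
  unfolding a\<theta>_def using cl_lt by (simp add: lsum_add lsum_dl)

lemma lsum_aT: "i' < n \<Longrightarrow> lsum F (aT i' b) = F (ClustN (cl i') b) + F (ClientN i' b)
     + (\<Sum>r<m i'. (X i' r $ b / \<beta> i') * F (ObsN i' r))"
  unfolding aT_def lsum_add lsum_sum lsum_scale by (simp add: lsum_a\<theta> lsum_dl)

lemma lsum_ay: "i' < n \<Longrightarrow> r < m i' \<Longrightarrow> lsum F (ay i' r) = (\<Sum>b\<in>UNIV. X i' r $ b * (F (ClustN (cl i') b) + F (ClientN i' b)))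
     + F (ObsN i' r)"
  unfolding ay_def lsum_add lsum_sum lsum_scale by (simp add: lsum_a\<theta> lsum_dl)

lemma dl_simps[simp]: "dl \<iota>0 \<iota> = (if \<iota> = \<iota>0 then 1 else 0)" by (simp add: dl_def)

lemma a\<theta>_pts[simp]:
  "a\<theta> i' b (ClustN j c) = (if cl i' = j \<and> c = b then 1 else 0)"
  "a\<theta> i' b (ClientN i2 c) = (if i2 = i' \<and> c = b then 1 else 0)"
  "a\<theta> i' b (ObsN i2 r) = 0"
  by (auto simp: a\<theta>_def)

lemma aT_pts[simp]:
  "aT i' b (ClustN j c) = (if cl i' = j \<and> c = b then 1 else 0)"
  "aT i' b (ClientN i2 c) = (if i2 = i' \<and> c = b then 1 else 0)"
  "aT i' b (ObsN i2 r) = (if i2 = i' \<and> r < m i' then X i' r $ b / \<beta> i' else 0)"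
  by (auto simp: aT_def if_distrib[of "\<lambda>x. _ * x"] cong: if_cong)

lemma ay_pts[simp]:
  "ay i' r (ClustN j c) = (if cl i' = j then X i' r $ c else 0)"
  "ay i' r (ClientN i2 c) = (if i2 = i' then X i' r $ c else 0)"
  "ay i' r (ObsN i2 r2) = (if i2 = i' \<and> r2 = r then 1 else 0)"
  by (auto simp: ay_def if_distrib[of "\<lambda>x. _ * x"] cong: if_cong)

lemma if_conj_0: "(if P \<and> Q then x else (0::real)) = (if P then (if Q then x else 0) else 0)" by simp
lemma sum_if_P: "(\<Sum>x\<in>S. if P then f x else (0::real)) = (if P then sum f S else 0)" by simp

definition aL :: "nat \<Rightarrow> (nat \<Rightarrow> real^'d) \<Rightarrow> (nat \<Rightarrow> real^'d^'d) \<Rightarrow> 'd \<Rightarrow> 'd noise_idx \<Rightarrow> real" where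
  "aL i A B a \<iota> = (\<Sum>r<m i. A r $ a * ay i r \<iota>) + (\<Sum>i''\<in>{..<n}-{i}. \<Sum>b\<in>UNIV. B i'' $ a $ b * aT i'' b \<iota>)"

definition "Md i A B a i' = (if i' = i then (\<Sum>r<m i. A r $ a * X i r $ a) else B i' $ a $ a)"

lemma aL_Clust:
  assumes i: "i < n"
  shows "aL i A B a (ClustN j a) = (\<Sum>i'<n. if cl i' = j then Md i A B a i' else 0)"
proof -
  have "aL i A B a (ClustN j a) = (if cl i = j then Md i A B a i else 0) + (\<Sum>i''\<in>{..<n}-{i}. if cl i'' = j then Md i A B a i'' else 0)"
    unfolding aL_def Md_def
    by (simp add: if_distrib[of "\<lambda>x. _ * x"] if_conj_0 sum_if_P sum.delta' sum.delta cong: if_cong)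
  also have "\<dots> = (\<Sum>i'<n. if cl i' = j then Md i A B a i' else 0)"
    using i by (simp add: sum.remove[of "{..<n}" i])
  finally show ?thesis .
qed

lemma aL_Client:
  assumes i: "i < n" and i': "i' < n"
  shows "aL i A B a (ClientN i' a) = Md i A B a i'"
  unfolding aL_def Md_def using i'
  by (simp add: if_distrib[of "\<lambda>x. _ * x"] if_conj_0 sum_if_P sum.delta' sum.delta cong: if_cong)

lemma aL_Obs:
  assumes i: "i < n" and i': "i' < n" and r: "r < m i'"
  shows "aL i A B a (ObsN i' r) = (if i' = i then A r $ a else (\<Sum>b\<in>UNIV. B i' $ a $ b * X i' r $ b) / \<beta> i')"
  unfolding aL_def using i' r
  by (cases "i' = i") (simp_all add: if_distrib[of "\<lambda>x. _ * x"] if_conj_0 sum_if_P sum.delta' sum.delta sum_divide_distrib cong: if_cong)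

lemma gram_entry: "i' < n \<Longrightarrow> (\<Sum>r<m i'. X i' r $ a * X i' r $ b) = (if a = b then \<beta> i' else 0)"
proof -
  assume i': "i' < n"
  have "(\<Sum>r<m i'. X i' r $ a * X i' r $ b) = gram X m i' $ a $ b" by (simp add: gram_def)
  also have "\<dots> = (if a = b then \<beta> i' else 0)" using gram_eq i' by (simp add: mat_def)
  finally show ?thesis .
qed

lemma obs_part:
  assumes i: "i < n" and i': "i' < n"
  shows "(\<Sum>r<m i'. X i' r $ a / \<beta> i' * (aL i A B a (ObsN i' r) * (sig i')\<^sup>2)) = (sig i')\<^sup>2 / \<beta> i' * Md i A B a i'"
proof -
  have b: "\<beta> i' > 0" using gram_eq i' by auto
  have "(\<Sum>r<m i'. X i' r $ a / \<beta> i' * (aL i A B a (ObsN i' r) * (sig i')\<^sup>2)) =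
      (\<Sum>r<m i'. X i' r $ a / \<beta> i' * ((if i' = i then A r $ a else (\<Sum>b\<in>UNIV. B i' $ a $ b * X i' r $ b) / \<beta> i') * (sig i')\<^sup>2))"
    using aL_Obs[OF i i'] by (intro sum.cong) auto
  also have "\<dots> = (sig i')\<^sup>2 / \<beta> i' * Md i A B a i'"
  proof (cases "i' = i")
    case True
    then show ?thesis unfolding Md_def by (simp add: sum_distrib_left algebra_simps)
  next
    case False
    have "(\<Sum>r<m i'. X i' r $ a / \<beta> i' * ((\<Sum>b\<in>UNIV. B i' $ a $ b * X i' r $ b) / \<beta> i' * (sig i')\<^sup>2))
        = (\<Sum>r<m i'. \<Sum>b\<in>UNIV. (sig i')\<^sup>2 / (\<beta> i')\<^sup>2 * (B i' $ a $ b * (X i' r $ a * X i' r $ b)))"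
    proof (rule sum.cong[OF refl])
      fix r
      have "X i' r $ a / \<beta> i' * ((\<Sum>b\<in>UNIV. B i' $ a $ b * X i' r $ b) / \<beta> i' * (sig i')\<^sup>2)
          = (\<Sum>b\<in>UNIV. X i' r $ a / \<beta> i' * (B i' $ a $ b * X i' r $ b / \<beta> i' * (sig i')\<^sup>2))"
        by (simp only: sum_divide_distrib sum_distrib_right sum_distrib_left)
      also have "\<dots> = (\<Sum>b\<in>UNIV. (sig i')\<^sup>2 / (\<beta> i')\<^sup>2 * (B i' $ a $ b * (X i' r $ a * X i' r $ b)))"
        by (rule sum.cong[OF refl]) (simp add: power2_eq_square)
      finally show "X i' r $ a / \<beta> i' * ((\<Sum>b\<in>UNIV. B i' $ a $ b * X i' r $ b) / \<beta> i' * (sig i')\<^sup>2)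
          = (\<Sum>b\<in>UNIV. (sig i')\<^sup>2 / (\<beta> i')\<^sup>2 * (B i' $ a $ b * (X i' r $ a * X i' r $ b)))" .
    qed
    also have "\<dots> = (\<Sum>b\<in>UNIV. \<Sum>r<m i'. (sig i')\<^sup>2 / (\<beta> i')\<^sup>2 * (B i' $ a $ b * (X i' r $ a * X i' r $ b)))"
      by (rule sum.swap)
    also have "\<dots> = (sig i')\<^sup>2 / (\<beta> i')\<^sup>2 * (\<Sum>b\<in>UNIV. B i' $ a $ b * (\<Sum>r<m i'. X i' r $ a * X i' r $ b))"
      by (simp only: sum_distrib_left)
    also have "\<dots> = (sig i')\<^sup>2 / (\<beta> i')\<^sup>2 * (B i' $ a $ a * \<beta> i')"
      using i' by (simp add: gram_entry if_distrib[of "\<lambda>x. _ * x"] cong: if_cong)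
    also have "\<dots> = (sig i')\<^sup>2 / \<beta> i' * Md i A B a i'"
      using False b unfolding Md_def by (simp add: power2_eq_square)
    finally show ?thesis using False by simp
  qed
  finally show ?thesis .
qed

lemma pr_aT_aL:
  assumes i: "i < n" and i': "i' < n"
  shows "pr (aT i' a) (aL i A B a) = (\<Sum>i''<n. VV i' i'' * Md i A B a i'')"
proof -
  have "pr (aT i' a) (aL i A B a) = sb\<^sup>2 * aL i A B a (ClustN (cl i') a) + (sbj (cl i'))\<^sup>2 * aL i A B a (ClientN i' a)
     + (\<Sum>r<m i'. X i' r $ a / \<beta> i' * (aL i A B a (ObsN i' r) * (sig i')\<^sup>2))"
    unfolding pr_def lsum_aT[OF i'] by (simp add: algebra_simps)
  also have "\<dots> = sb\<^sup>2 * (\<Sum>i''<n. if cl i'' = cl i' then Md i A B a i'' else 0)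
       + ((sbj (cl i'))\<^sup>2 + (sig i')\<^sup>2 / \<beta> i') * Md i A B a i'"
    unfolding aL_Clust[OF i] aL_Client[OF i i'] obs_part[OF i i'] by (simp add: algebra_simps)
  also have "\<dots> = (\<Sum>i''<n. VV i' i'' * Md i A B a i'')"
  proof -
    have g: "1 / gam i' = (sbj (cl i'))\<^sup>2" by (simp add: gam_def)
    have a: "1 / aa i' = (sig i')\<^sup>2 / \<beta> i'" by (simp add: aa_def)
    have "(\<Sum>i''<n. VV i' i'' * Md i A B a i'') = (\<Sum>i''<n. sb\<^sup>2 * (if cl i'' = cl i' then Md i A B a i'' else 0)
        + (if i'' = i' then (1 / gam i' + 1 / aa i') * Md i A B a i'' else 0))"
      by (rule sum.cong) (auto simp: VV_def algebra_simps)
    also have "\<dots> = sb\<^sup>2 * (\<Sum>i''<n. if cl i'' = cl i' then Md i A B a i'' else 0)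
        + (1 / gam i' + 1 / aa i') * Md i A B a i'"
      using i' by (simp add: sum.distrib sum_distrib_left sum.delta)
    finally show ?thesis unfolding g a by simp
  qed
  finally show ?thesis .
qed

lemma pr_a\<theta>_aL:
  assumes i: "i < n"
  shows "pr (a\<theta> i a) (aL i A B a) = (\<Sum>i''<n. vv i i'' * Md i A B a i'')"
proof -
  have "pr (a\<theta> i a) (aL i A B a) = sb\<^sup>2 * aL i A B a (ClustN (cl i) a) + (sbj (cl i))\<^sup>2 * aL i A B a (ClientN i a)"
    unfolding pr_def lsum_a\<theta>[OF i] by (simp add: algebra_simps)
  also have "\<dots> = sb\<^sup>2 * (\<Sum>i''<n. if cl i'' = cl i then Md i A B a i'' else 0) + (sbj (cl i))\<^sup>2 * Md i A B a i"
    unfolding aL_Clust[OF i] aL_Client[OF i i] ..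
  also have "\<dots> = (\<Sum>i''<n. vv i i'' * Md i A B a i'')"
  proof -
    have "(\<Sum>i''<n. vv i i'' * Md i A B a i'') = (\<Sum>i''<n. sb\<^sup>2 * (if cl i'' = cl i then Md i A B a i'' else 0)
        + (if i'' = i then (sbj (cl i))\<^sup>2 * Md i A B a i'' else 0))"
      by (rule sum.cong) (auto simp: vv_def gam_def algebra_simps)
    also have "\<dots> = sb\<^sup>2 * (\<Sum>i''<n. if cl i'' = cl i then Md i A B a i'' else 0) + (sbj (cl i))\<^sup>2 * Md i A B a i"
      using i by (simp add: sum.distrib sum_distrib_left sum.delta)
    finally show ?thesis by simp
  qed
  finally show ?thesis .
qed

lemma Md_sum:
  assumes i: "i < n"
  shows "(\<Sum>i''<n. Md i A B a i'') = blk_times_Z X m n i A B $ a $ a"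
proof -
  have "(\<Sum>i''<n. Md i A B a i'') = Md i A B a i + (\<Sum>i''\<in>{..<n}-{i}. Md i A B a i'')"
    using i by (simp add: sum.remove[of "{..<n}" i])
  also have "(\<Sum>i''\<in>{..<n}-{i}. Md i A B a i'') = (\<Sum>i''\<in>{..<n}-{i}. B i'' $ a $ a)"
    by (rule sum.cong) (auto simp: Md_def)
  finally show ?thesis by (simp add: blk_times_Z_def Md_def sum_component)
qed

definition "ae i a \<iota> = (\<Sum>i'<n. cc i i' * aT i' a \<iota>) - a\<theta> i a \<iota>"

lemma pr_ae_aL:
  assumes i: "i < n"
  shows "pr (ae i a) (aL i A B a) = kap1 i * lam / QQ * blk_times_Z X m n i A B $ a $ a"
proof -
  have "pr (ae i a) (aL i A B a) = (\<Sum>i'<n. cc i i' * pr (aT i' a) (aL i A B a)) - pr (a\<theta> i a) (aL i A B a)"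
    unfolding ae_def pr_def lsum_diff lsum_sum lsum_scale ..
  also have "\<dots> = (\<Sum>i'<n. cc i i' * (\<Sum>i''<n. VV i' i'' * Md i A B a i'')) - (\<Sum>i''<n. vv i i'' * Md i A B a i'')"
    using pr_aT_aL[OF i] pr_a\<theta>_aL[OF i] by simp
  also have "\<dots> = (\<Sum>i''<n. Md i A B a i'' * ((\<Sum>i'<n. cc i i' * VV i' i'') - vv i i''))"
  proof -
    have "(\<Sum>i'<n. cc i i' * (\<Sum>i''<n. VV i' i'' * Md i A B a i'')) = (\<Sum>i'<n. \<Sum>i''<n. Md i A B a i'' * (cc i i' * VV i' i''))"
      by (simp only: sum_distrib_left mult.commute mult.left_commute)
    also have "\<dots> = (\<Sum>i''<n. \<Sum>i'<n. Md i A B a i'' * (cc i i' * VV i' i''))" by (rule sum.swap)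
    also have "\<dots> = (\<Sum>i''<n. Md i A B a i'' * (\<Sum>i'<n. cc i i' * VV i' i''))" by (simp only: sum_distrib_left)
    finally show ?thesis by (simp add: right_diff_distrib sum_subtractf mult.commute)
  qed
  also have "\<dots> = (\<Sum>i''<n. Md i A B a i'' * (kap1 i * lam / QQ))"
    using K_ident[OF i] by (intro sum.cong) auto
  also have "\<dots> = kap1 i * lam / QQ * blk_times_Z X m n i A B $ a $ a"
    by (simp only: sum_distrib_right[symmetric] Md_sum[OF i] mult.commute)
  finally show ?thesis .
qed

end



context hm begin

lemma cp_lin:
  assumes i': "i' < n"
  shows "client_param \<theta>0 cl g i' \<omega> $ b = \<theta>0 $ b + lsum (\<lambda>\<iota>. g \<iota> \<omega>) (a\<theta> i' b)"
  unfolding lsum_a\<theta>[OF i'] by (simp add: client_param_def cluster_param_def)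

lemma dot_expand: "x \<bullet> (y::real^'d) = (\<Sum>b\<in>UNIV. x $ b * y $ b)" by (simp add: inner_vec_def)

lemma obs_lin:
  assumes i': "i' < n" and r: "r < m i'"
  shows "obs X \<theta>0 cl g i' \<omega> r = X i' r \<bullet> \<theta>0 + lsum (\<lambda>\<iota>. g \<iota> \<omega>) (ay i' r)"
proof -
  have "X i' r \<bullet> client_param \<theta>0 cl g i' \<omega> = (\<Sum>b\<in>UNIV. X i' r $ b * (\<theta>0 $ b + (g (ClustN (cl i') b) \<omega> + g (ClientN i' b) \<omega>)))"
    unfolding dot_expand cp_lin[OF i'] lsum_a\<theta>[OF i'] ..
  also have "\<dots> = X i' r \<bullet> \<theta>0 + (\<Sum>b\<in>UNIV. X i' r $ b * (g (ClustN (cl i') b) \<omega> + g (ClientN i' b) \<omega>))"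
    unfolding dot_expand by (simp add: distrib_left sum.distrib)
  finally show ?thesis unfolding obs_def lsum_ay[OF i' r] by simp
qed

lemma direct_est_scaled:
  assumes i': "i' < n"
  shows "direct_est X m i' yi = (1 / \<beta> i') *\<^sub>R Xty X m i' yi"
proof -
  have "\<beta> i' > 0" "gram X m i' = \<beta> i' *\<^sub>R mat 1" using gram_eq i' by auto
  then show ?thesis unfolding direct_est_def
    by (simp add: matrix_inv_scaled_id scaleR_matrix_vector_assoc[symmetric])
qed

lemma de_lin:
  assumes i': "i' < n"
  shows "direct_est X m i' (obs X \<theta>0 cl g i' \<omega>) $ b = \<theta>0 $ b + lsum (\<lambda>\<iota>. g \<iota> \<omega>) (aT i' b)"
proof -
  define th where "th = client_param \<theta>0 cl g i' \<omega>"
  have bp: "\<beta> i' > 0" using gram_eq i' by auto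
  have "Xty X m i' (obs X \<theta>0 cl g i' \<omega>) $ b = (\<Sum>r<m i'. (X i' r \<bullet> th) * X i' r $ b) + (\<Sum>r<m i'. g (ObsN i' r) \<omega> * X i' r $ b)"
    unfolding Xty_def obs_def th_def by (simp add: sum_component distrib_right sum.distrib)
  also have "(\<Sum>r<m i'. (X i' r \<bullet> th) * X i' r $ b) = (\<Sum>b'\<in>UNIV. th $ b' * (\<Sum>r<m i'. X i' r $ b * X i' r $ b'))"
  proof -
    have "(\<Sum>r<m i'. (X i' r \<bullet> th) * X i' r $ b) = (\<Sum>r<m i'. \<Sum>b'\<in>UNIV. th $ b' * (X i' r $ b * X i' r $ b'))"
      unfolding dot_expand by (simp add: sum_distrib_right sum_distrib_left algebra_simps)
    also have "\<dots> = (\<Sum>b'\<in>UNIV. \<Sum>r<m i'. th $ b' * (X i' r $ b * X i' r $ b'))" by (rule sum.swap)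
    finally show ?thesis by (simp only: sum_distrib_left)
  qed
  also have "\<dots> = th $ b * \<beta> i'"
    using i' by (simp add: gram_entry if_distrib[of "\<lambda>x. _ * x"] cong: if_cong)
  finally have xt: "Xty X m i' (obs X \<theta>0 cl g i' \<omega>) $ b = th $ b * \<beta> i' + (\<Sum>r<m i'. g (ObsN i' r) \<omega> * X i' r $ b)" .
  have "direct_est X m i' (obs X \<theta>0 cl g i' \<omega>) $ b = th $ b + (\<Sum>r<m i'. X i' r $ b / \<beta> i' * g (ObsN i' r) \<omega>)"
    unfolding direct_est_scaled[OF i'] using bp
    by (simp add: xt sum_divide_distrib add_divide_distrib algebra_simps)
  also have "\<dots> = \<theta>0 $ b + lsum (\<lambda>\<iota>. g \<iota> \<omega>) (aT i' b)"
    unfolding th_def cp_lin[OF i'] lsum_aT[OF i'] lsum_a\<theta>[OF i'] by simp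
  finally show ?thesis .
qed

lemma blk_lin:
  assumes i: "i < n"
  shows "blk_apply m n i A B (obs X \<theta>0 cl g i \<omega>) (\<lambda>i''. direct_est X m i'' (obs X \<theta>0 cl g i'' \<omega>)) $ a
     = (blk_times_Z X m n i A B *v \<theta>0) $ a + lsum (\<lambda>\<iota>. g \<iota> \<omega>) (aL i A B a)"
proof -
  define S where "S = {..<n} - {i}"
  define G where "G = (\<lambda>\<iota>. g \<iota> \<omega>)"
  have 1: "blk_apply m n i A B (obs X \<theta>0 cl g i \<omega>) (\<lambda>i''. direct_est X m i'' (obs X \<theta>0 cl g i'' \<omega>)) $ a
     = (\<Sum>r<m i. obs X \<theta>0 cl g i \<omega> r * A r $ a) + (\<Sum>i''\<in>S. \<Sum>b\<in>UNIV. B i'' $ a $ b * direct_est X m i'' (obs X \<theta>0 cl g i'' \<omega>) $ b)"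
    unfolding blk_apply_def S_def by (simp add: sum_component matrix_vector_mult_def)
  also have "\<dots> = ((\<Sum>r<m i. (X i r \<bullet> \<theta>0) * A r $ a) + (\<Sum>i''\<in>S. \<Sum>b\<in>UNIV. B i'' $ a $ b * \<theta>0 $ b))
      + ((\<Sum>r<m i. A r $ a * lsum G (ay i r)) + (\<Sum>i''\<in>S. \<Sum>b\<in>UNIV. B i'' $ a $ b * lsum G (aT i'' b)))"
  proof -
    have "(\<Sum>r<m i. obs X \<theta>0 cl g i \<omega> r * A r $ a) = (\<Sum>r<m i. (X i r \<bullet> \<theta>0) * A r $ a) + (\<Sum>r<m i. A r $ a * lsum G (ay i r))"
      unfolding sum.distrib[symmetric] G_def by (intro sum.cong refl) (simp add: obs_lin[OF i] algebra_simps)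
    moreover have "(\<Sum>i''\<in>S. \<Sum>b\<in>UNIV. B i'' $ a $ b * direct_est X m i'' (obs X \<theta>0 cl g i'' \<omega>) $ b)
       = (\<Sum>i''\<in>S. \<Sum>b\<in>UNIV. B i'' $ a $ b * \<theta>0 $ b) + (\<Sum>i''\<in>S. \<Sum>b\<in>UNIV. B i'' $ a $ b * lsum G (aT i'' b))"
      unfolding sum.distrib[symmetric] G_def by (intro sum.cong refl) (simp add: de_lin S_def algebra_simps)
    ultimately show ?thesis by simp
  qed
  also have "(\<Sum>r<m i. (X i r \<bullet> \<theta>0) * A r $ a) + (\<Sum>i''\<in>S. \<Sum>b\<in>UNIV. B i'' $ a $ b * \<theta>0 $ b)
      = (blk_times_Z X m n i A B *v \<theta>0) $ a"
  proof -
    have "(blk_times_Z X m n i A B *v \<theta>0) $ a = (\<Sum>b\<in>UNIV. (\<Sum>r<m i. A r $ a * X i r $ b) * \<theta>0 $ b)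
        + (\<Sum>b\<in>UNIV. (\<Sum>i''\<in>S. B i'' $ a $ b) * \<theta>0 $ b)"
      unfolding blk_times_Z_def S_def by (simp add: matrix_vector_mult_def sum_component distrib_right sum.distrib)
    also have "(\<Sum>b\<in>UNIV. (\<Sum>r<m i. A r $ a * X i r $ b) * \<theta>0 $ b) = (\<Sum>r<m i. (X i r \<bullet> \<theta>0) * A r $ a)"
    proof -
      have "(\<Sum>b\<in>UNIV. (\<Sum>r<m i. A r $ a * X i r $ b) * \<theta>0 $ b) = (\<Sum>b\<in>UNIV. \<Sum>r<m i. A r $ a * (X i r $ b * \<theta>0 $ b))"
        by (simp add: sum_distrib_right mult.assoc)
      also have "\<dots> = (\<Sum>r<m i. \<Sum>b\<in>UNIV. A r $ a * (X i r $ b * \<theta>0 $ b))" by (rule sum.swap)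
      finally show ?thesis by (simp add: dot_expand sum_distrib_left mult.commute)
    qed
    also have "(\<Sum>b\<in>UNIV. (\<Sum>i''\<in>S. B i'' $ a $ b) * \<theta>0 $ b) = (\<Sum>i''\<in>S. \<Sum>b\<in>UNIV. B i'' $ a $ b * \<theta>0 $ b)"
      by (simp add: sum_distrib_right) (rule sum.swap)
    finally show ?thesis by simp
  qed
  also have "(\<Sum>r<m i. A r $ a * lsum G (ay i r)) + (\<Sum>i''\<in>S. \<Sum>b\<in>UNIV. B i'' $ a $ b * lsum G (aT i'' b))
      = lsum G (aL i A B a)"
    unfolding aL_def S_def[symmetric] lsum_add lsum_sum lsum_scale ..
  finally show ?thesis unfolding G_def .
qed

end



context hm begin

definition Ast :: "nat \<Rightarrow> nat \<Rightarrow> real^'d" where "Ast i r = (cc i i / \<beta> i) *\<^sub>R X i r"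
definition Bst :: "nat \<Rightarrow> nat \<Rightarrow> real^'d^'d" where "Bst i i'' = cc i i'' *\<^sub>R mat 1"

lemma Z_Ast:
  assumes i: "i < n"
  shows "blk_times_Z X m n i (Ast i) (Bst i) = mat 1"
proof -
  have b: "\<beta> i > 0" using gram_eq i by auto
  have "blk_times_Z X m n i (Ast i) (Bst i) $ a $ b' = (if a = b' then 1 else 0)" for a b'
  proof -
    have "blk_times_Z X m n i (Ast i) (Bst i) $ a $ b' = cc i i / \<beta> i * (\<Sum>r<m i. X i r $ a * X i r $ b')
        + (\<Sum>i''\<in>{..<n}-{i}. cc i i'') * (if a = b' then 1 else 0)"
      unfolding blk_times_Z_def Ast_def Bst_def
      by (simp add: sum_component mat_def sum_distrib_left sum_distrib_right algebra_simps)
    also have "\<dots> = (cc i i + (\<Sum>i''\<in>{..<n}-{i}. cc i i'')) * (if a = b' then 1 else 0)"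
      unfolding gram_entry[OF i] using b by auto
    also have "cc i i + (\<Sum>i''\<in>{..<n}-{i}. cc i i'') = 1"
      using cc_sum[OF i] i by (simp add: sum.remove[of "{..<n}" i])
    finally show ?thesis by simp
  qed
  then show ?thesis by (simp add: vec_eq_iff mat_def)
qed

lemma apply_Ast:
  assumes i: "i < n" and t: "t i = direct_est X m i yi"
  shows "blk_apply m n i (Ast i) (Bst i) yi t = thh i t"
proof -
  have "(\<Sum>r<m i. yi r *\<^sub>R Ast i r) = cc i i *\<^sub>R t i"
    unfolding t direct_est_scaled[OF i] Ast_def Xty_def by (simp add: scaleR_sum_right) (rule sum.cong, simp_all add: mult.commute)
  moreover have "(\<Sum>i'\<in>{..<n} - {i}. Bst i i' *v t i') = (\<Sum>i'\<in>{..<n} - {i}. cc i i' *\<^sub>R t i')"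
    unfolding Bst_def by (simp add: scaleR_matrix_vector_assoc[symmetric])
  ultimately show ?thesis
    unfolding blk_apply_def thh_lin[OF i] using i by (simp add: sum.remove[of "{..<n}" i])
qed

lemma aL_Ast:
  assumes i: "i < n"
  shows "aL i (Ast i) (Bst i) a \<iota> = (\<Sum>i'<n. cc i i' * aT i' a \<iota>)"
proof -
  have b: "\<beta> i > 0" using gram_eq i by auto
  have 1: "(\<Sum>b\<in>UNIV. Bst i i'' $ a $ b * aT i'' b \<iota>) = cc i i'' * aT i'' a \<iota>" for i''
  proof -
    have "(\<Sum>b\<in>UNIV. Bst i i'' $ a $ b * aT i'' b \<iota>) = (\<Sum>b\<in>UNIV. if a = b then cc i i'' * aT i'' b \<iota> else 0)"
      unfolding Bst_def by (intro sum.cong refl) (simp add: mat_def)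
    then show ?thesis by (simp add: sum.delta)
  qed
  have "(\<Sum>r<m i. Ast i r $ a * ay i r \<iota>) = cc i i / \<beta> i * (\<Sum>b\<in>UNIV. (\<Sum>r<m i. X i r $ a * X i r $ b) * a\<theta> i b \<iota>)
        + cc i i * (\<Sum>r<m i. X i r $ a / \<beta> i * dl (ObsN i r) \<iota>)"
  proof -
    have "(\<Sum>r<m i. Ast i r $ a * ay i r \<iota>) = (\<Sum>r<m i. \<Sum>b\<in>UNIV. cc i i / \<beta> i * (X i r $ a * X i r $ b * a\<theta> i b \<iota>))
        + (\<Sum>r<m i. cc i i * (X i r $ a / \<beta> i * dl (ObsN i r) \<iota>))"
      unfolding Ast_def ay_def sum.distrib[symmetric]
      by (intro sum.cong refl) (simp add: sum_distrib_left sum_divide_distrib algebra_simps)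
    also have "(\<Sum>r<m i. \<Sum>b\<in>UNIV. cc i i / \<beta> i * (X i r $ a * X i r $ b * a\<theta> i b \<iota>))
        = (\<Sum>b\<in>UNIV. \<Sum>r<m i. cc i i / \<beta> i * (X i r $ a * X i r $ b * a\<theta> i b \<iota>))" by (rule sum.swap)
    finally show ?thesis by (simp add: sum_distrib_left sum_distrib_right)
  qed
  also have "\<dots> = cc i i * aT i a \<iota>"
    unfolding gram_entry[OF i] using b
    by (simp add: if_distrib[of "\<lambda>x. x * _"] sum.delta aT_def distrib_left cong: if_cong)
  finally have 2: "(\<Sum>r<m i. Ast i r $ a * ay i r \<iota>) = cc i i * aT i a \<iota>" .
  show ?thesis unfolding aL_def 1 2 using i by (simp add: sum.remove[of "{..<n}" i])
qed

lemma aL_split: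
  "aL i A B a \<iota> = aL i A1 B1 a \<iota> + aL i (\<lambda>r. A r - A1 r) (\<lambda>i'. B i' - B1 i') a \<iota>"
  unfolding aL_def by (simp add: algebra_simps sum.distrib[symmetric] sum_subtractf[symmetric])

lemma Z_split:
  "blk_times_Z X m n i A B = blk_times_Z X m n i A1 B1 + blk_times_Z X m n i (\<lambda>r. A r - A1 r) (\<lambda>i'. B i' - B1 i')"
  unfolding blk_times_Z_def
  by (simp add: vec_eq_iff sum_component sum_subtractf algebra_simps)

lemma pr_add: "pr (\<lambda>\<iota>. x \<iota> + y \<iota>) (\<lambda>\<iota>. x \<iota> + y \<iota>) = pr x x + 2 * pr x y + pr y y"
  unfolding pr_def lsum_def by (simp add: algebra_simps sum.distrib sum_distrib_left)

end



context hm begin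

lemma risk:
  fixes M :: "'a measure" and g :: "'d noise_idx \<Rightarrow> 'a \<Rightarrow> real"
  assumes P: "prob_space M"
    and ind: "prob_space.indep_vars M (\<lambda>_. borel) g (noise_set k n m)"
    and dist: "\<forall>\<iota>\<in>noise_set k n m. distributed M lborel (g \<iota>) (normal_density 0 (noise_sd sb sbj sig cl \<iota>))"
    and i: "i < n" and Z: "blk_times_Z X m n i A B = mat 1"
  shows "(\<integral>\<omega>. (norm (blk_apply m n i A B (obs X \<theta>0 cl g i \<omega>) (\<lambda>i'. direct_est X m i' (obs X \<theta>0 cl g i' \<omega>))
             - client_param \<theta>0 cl g i \<omega>))\<^sup>2 \<partial>M)
    = (\<Sum>a\<in>UNIV. pr (\<lambda>\<iota>. aL i A B a \<iota> - a\<theta> i a \<iota>) (\<lambda>\<iota>. aL i A B a \<iota> - a\<theta> i a \<iota>))"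
proof -
  have pos: "\<forall>\<iota>\<in>NN. sd \<iota> > 0"
  proof
    fix \<iota> assume "\<iota> \<in> NN"
    then show "sd \<iota> > 0" using sb_pos sbj_pos sig_pos cl_lt
      by (cases \<iota>) (auto simp: NN_def noise_set_def)
  qed
  have dist': "\<forall>\<iota>\<in>NN. distributed M lborel (g \<iota>) (\<lambda>x. ennreal (normal_density 0 (sd \<iota>) x))"
    using dist by (simp add: NN_def sd_def)
  have ind': "prob_space.indep_vars M (\<lambda>_. borel) g NN" using ind by (simp add: NN_def)
  define \<alpha> where "\<alpha> a = (\<lambda>\<iota>. aL i A B a \<iota> - a\<theta> i a \<iota>)" for a
  have comp: "(blk_apply m n i A B (obs X \<theta>0 cl g i \<omega>) (\<lambda>i'. direct_est X m i' (obs X \<theta>0 cl g i' \<omega>))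
             - client_param \<theta>0 cl g i \<omega>) $ a = 0 + (\<Sum>\<iota>\<in>NN. \<alpha> a \<iota> * g \<iota> \<omega>)" for \<omega> a
    unfolding vector_minus_component blk_lin[OF i] cp_lin[OF i] Z \<alpha>_def lsum_diff[symmetric]
    by (simp add: lsum_def sum_subtractf left_diff_distrib)
  have nrm: "(norm v)\<^sup>2 = (\<Sum>a\<in>UNIV. (v $ a)\<^sup>2)" for v :: "real^'d"
    unfolding power2_norm_eq_inner by (simp add: inner_vec_def power2_eq_square)
  have gs: "integrable M (\<lambda>\<omega>. (0 + (\<Sum>\<iota>\<in>NN. \<alpha> a \<iota> * g \<iota> \<omega>))\<^sup>2)"
     "(\<integral>\<omega>. (0 + (\<Sum>\<iota>\<in>NN. \<alpha> a \<iota> * g \<iota> \<omega>))\<^sup>2 \<partial>M) = 0\<^sup>2 + (\<Sum>\<iota>\<in>NN. (\<alpha> a \<iota>)\<^sup>2 * (sd \<iota>)\<^sup>2)" for a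
    using gauss_sq[OF P NN_fin ind' dist' pos, of 0 "\<alpha> a"] by auto
  have "(\<integral>\<omega>. (norm (blk_apply m n i A B (obs X \<theta>0 cl g i \<omega>) (\<lambda>i'. direct_est X m i' (obs X \<theta>0 cl g i' \<omega>))
             - client_param \<theta>0 cl g i \<omega>))\<^sup>2 \<partial>M) = (\<integral>\<omega>. (\<Sum>a\<in>UNIV. (0 + (\<Sum>\<iota>\<in>NN. \<alpha> a \<iota> * g \<iota> \<omega>))\<^sup>2) \<partial>M)"
    unfolding nrm comp ..
  also have "\<dots> = (\<Sum>a\<in>UNIV. (\<integral>\<omega>. (0 + (\<Sum>\<iota>\<in>NN. \<alpha> a \<iota> * g \<iota> \<omega>))\<^sup>2 \<partial>M))"
    by (rule Bochner_Integration.integral_sum) (rule gs(1))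
  also have "\<dots> = (\<Sum>a\<in>UNIV. pr (\<alpha> a) (\<alpha> a))"
    unfolding gs(2) by (simp add: pr_def lsum_def power2_eq_square mult.assoc)
  finally show ?thesis unfolding \<alpha>_def .
qed

end

theorem mainTheorem11:
  fixes M :: "'a measure" and g :: "'d::finite noise_idx \<Rightarrow> 'a \<Rightarrow> real"
    and n k i :: nat and cl m :: "nat \<Rightarrow> nat" and X :: "nat \<Rightarrow> nat \<Rightarrow> real^'d"
    and \<theta>0 :: "real^'d" and sb :: real and sbj sig \<beta> :: "nat \<Rightarrow> real"
    and y :: "'a \<Rightarrow> nat \<Rightarrow> nat \<Rightarrow> real" and \<theta>hat :: "'a \<Rightarrow> nat \<Rightarrow> real^'d"
    and \<theta>d :: "'a \<Rightarrow> nat \<Rightarrow> real^'d" and \<theta>star :: "'a \<Rightarrow> real^'d"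
  assumes "prob_space M"
    and "\<forall>i'<n. cl i' < k" and "\<forall>j<k. \<exists>i'<n. cl i' = j"
    and "sb > 0" and "\<forall>j<k. sbj j > 0" and "\<forall>i'<n. sig i' > 0"
    and "\<forall>i'<n. \<beta> i' > 0 \<and> gram X m i' = \<beta> i' *\<^sub>R mat 1"
    and "prob_space.indep_vars M (\<lambda>_. borel) g (noise_set k n m)"
    and "\<forall>\<iota>\<in>noise_set k n m. distributed M lborel (g \<iota>) (normal_density 0 (noise_sd sb sbj sig cl \<iota>))"
    and "i < n"
  defines "y \<equiv> \<lambda>\<omega> i' r. obs X \<theta>0 cl g i' \<omega> r"
    and "\<theta>hat \<equiv> \<lambda>\<omega>. hier_est k n m X cl (\<lambda>_. 1 / sb\<^sup>2) (\<lambda>i'. 1 / (sbj (cl i'))\<^sup>2) sig (y \<omega>)"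
    and "\<theta>d \<equiv> \<lambda>\<omega> i'. direct_est X m i' (y \<omega> i')"
    and "\<theta>star \<equiv> client_param \<theta>0 cl g i"
  shows "(\<exists>A B. blk_times_Z X m n i A B = mat 1 \<and>
              (\<forall>\<omega>. \<theta>hat \<omega> i = blk_apply m n i A B (y \<omega> i) (\<theta>d \<omega>)))
       \<and> (\<forall>A B. blk_times_Z X m n i A B = mat 1 \<longrightarrow>
              (\<integral>\<omega>. (norm (\<theta>hat \<omega> i - \<theta>star \<omega>))\<^sup>2 \<partial>M)
                \<le> (\<integral>\<omega>. (norm (blk_apply m n i A B (y \<omega> i) (\<theta>d \<omega>) - \<theta>star \<omega>))\<^sup>2 \<partial>M))"
proof -
  interpret P: prob_space M by (rule assms(1))
  interpret H: hm n k cl m X sb sbj sig \<beta>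
    using assms(2-7,10) by unfold_locales auto
  have yeq: "y \<omega> i' = obs X \<theta>0 cl g i' \<omega>" for \<omega> i' unfolding y_def ..
  have deq: "\<theta>d \<omega> = (\<lambda>i'. direct_est X m i' (obs X \<theta>0 cl g i' \<omega>))" for \<omega> unfolding \<theta>d_def yeq ..
  have hat: "\<theta>hat \<omega> i = H.thh i (\<theta>d \<omega>)" for \<omega>
    unfolding \<theta>hat_def by (rule H.hier_est_eq) (auto simp: \<theta>d_def assms(10))
  have hat2: "\<theta>hat \<omega> i = blk_apply m n i (H.Ast i) (H.Bst i) (y \<omega> i) (\<theta>d \<omega>)" for \<omega>
    unfolding hat by (rule H.apply_Ast[symmetric, OF assms(10)]) (simp add: \<theta>d_def)
  have ZA: "blk_times_Z X m n i (H.Ast i) (H.Bst i) = mat 1" by (rule H.Z_Ast[OF assms(10)])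
  show ?thesis
  proof (intro conjI allI impI)
    show "\<exists>A B. blk_times_Z X m n i A B = mat 1 \<and> (\<forall>\<omega>. \<theta>hat \<omega> i = blk_apply m n i A B (y \<omega> i) (\<theta>d \<omega>))"
      using ZA hat2 by blast
  next
    fix A B assume Z: "blk_times_Z X m n i A B = mat 1"
    define D where "D a \<iota> = H.aL i (\<lambda>r. A r - H.Ast i r) (\<lambda>i'. B i' - H.Bst i i') a \<iota>" for a \<iota>
    have ZD: "blk_times_Z X m n i (\<lambda>r. A r - H.Ast i r) (\<lambda>i'. B i' - H.Bst i i') = 0"
      using H.Z_split[of i A B "H.Ast i" "H.Bst i"] Z ZA by simp
    have L: "(\<integral>\<omega>. (norm (\<theta>hat \<omega> i - \<theta>star \<omega>))\<^sup>2 \<partial>M) = (\<Sum>a\<in>UNIV. H.pr (H.ae i a) (H.ae i a))"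
    proof -
      have "(\<integral>\<omega>. (norm (\<theta>hat \<omega> i - \<theta>star \<omega>))\<^sup>2 \<partial>M) =
        (\<Sum>a\<in>UNIV. H.pr (\<lambda>\<iota>. H.aL i (H.Ast i) (H.Bst i) a \<iota> - H.a\<theta> i a \<iota>) (\<lambda>\<iota>. H.aL i (H.Ast i) (H.Bst i) a \<iota> - H.a\<theta> i a \<iota>))"
        unfolding hat2 \<theta>star_def yeq deq by (rule H.risk[OF assms(1) assms(8) assms(9) assms(10) ZA])
      also have "(\<lambda>a. \<lambda>\<iota>. H.aL i (H.Ast i) (H.Bst i) a \<iota> - H.a\<theta> i a \<iota>) = H.ae i"
        by (simp add: fun_eq_iff H.aL_Ast[OF assms(10)] H.ae_def)
      finally show ?thesis .
    qed
    have R: "(\<integral>\<omega>. (norm (blk_apply m n i A B (y \<omega> i) (\<theta>d \<omega>) - \<theta>star \<omega>))\<^sup>2 \<partial>M)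
        = (\<Sum>a\<in>UNIV. H.pr (\<lambda>\<iota>. H.ae i a \<iota> + D a \<iota>) (\<lambda>\<iota>. H.ae i a \<iota> + D a \<iota>))"
    proof -
      have "(\<integral>\<omega>. (norm (blk_apply m n i A B (y \<omega> i) (\<theta>d \<omega>) - \<theta>star \<omega>))\<^sup>2 \<partial>M) =
        (\<Sum>a\<in>UNIV. H.pr (\<lambda>\<iota>. H.aL i A B a \<iota> - H.a\<theta> i a \<iota>) (\<lambda>\<iota>. H.aL i A B a \<iota> - H.a\<theta> i a \<iota>))"
        unfolding \<theta>star_def yeq deq by (rule H.risk[OF assms(1) assms(8) assms(9) assms(10) Z])
      also have "(\<lambda>a. \<lambda>\<iota>. H.aL i A B a \<iota> - H.a\<theta> i a \<iota>) = (\<lambda>a \<iota>. H.ae i a \<iota> + D a \<iota>)"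
        by (simp add: fun_eq_iff D_def H.aL_split[of i A B _ _ "H.Ast i" "H.Bst i"] H.aL_Ast[OF assms(10)] H.ae_def)
      finally show ?thesis .
    qed
    have "H.pr (H.ae i a) (H.ae i a) \<le> H.pr (\<lambda>\<iota>. H.ae i a \<iota> + D a \<iota>) (\<lambda>\<iota>. H.ae i a \<iota> + D a \<iota>)" for a
    proof -
      have "H.pr (H.ae i a) (D a) = 0"
        using H.pr_ae_aL[OF assms(10), where A="\<lambda>r. A r - H.Ast i r" and B="\<lambda>i'. B i' - H.Bst i i'" and a=a] ZD
        by (simp add: D_def[abs_def])
      then show ?thesis using H.pr_add[of "H.ae i a" "D a"] H.pr_nonneg[of "D a"] by simp
    qed
    then show "(\<integral>\<omega>. (norm (\<theta>hat \<omega> i - \<theta>star \<omega>))\<^sup>2 \<partial>M)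
                \<le> (\<integral>\<omega>. (norm (blk_apply m n i A B (y \<omega> i) (\<theta>d \<omega>) - \<theta>star \<omega>))\<^sup>2 \<partial>M)"
      unfolding L R by (rule sum_mono)
  qed
qed



end
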